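(* Assume $K$ is simple, so that $\mathfrak k=\mathfrak k_1$ is simple ($r=1$, $s=0$). Let $T=-T_{\mathfrak p}Q|_{\mathfrak p}+T_1Q|_{\mathfrak k_1}$ with $T_{\mathfrak p},T_1>0$. Then: (1) If $2nT_{\mathfrak p}(2T_1-\kappa_1T_{\mathfrak p})<-d_1T_1^2$, there is no metric $g\in\mathcal M_K$ with $\mathrm{Ric}(g)=cT$ for some $c$. (2) If $2nT_{\mathfrak p}(2T_1-\kappa_1T_{\mathfrak p})=-d_1T_1^2$ or $2T_1-\kappa_1T_{\mathfrak p}\ge0$, there is exactly one pair $(g,c)\in\mathcal M_K\times(0,\infty)$, up to scaling of $g$, with $\mathrm{Ric}(g)=cT$. (3) If $-d_1T_1^2<2nT_{\mathfrak p}(2T_1-\kappa_1T_{\mathfrak p})<0$, there are exactly two pairs $(g,c)\in\mathcal M_K\times(0,\infty)$, up to scaling of $g$, with $\mathrm{Ric}(g)=cT$.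
   Context: Let $G$ be a connected non-compact simple Lie group with Lie algebra $\mathfrak g$, $K$ a maximal compact subgroup with Lie algebra $\mathfrak k=\mathfrak k_1$, $B$ the Killing form of $\mathfrak g$, and $\mathfrak p$ the $B$-orthogonal complement of $\mathfrak k$ in $\mathfrak g$. Let $Q=B|_{\mathfrak p}-B|_{\mathfrak k}$. Let $n=\dim\mathfrak p$, $d_1=\dim\mathfrak k_1$, and define $\kappa_1$ by $B_1=\kappa_1B|_{\mathfrak k_1}$, where $B_1$ is the Killing form of $\mathfrak k_1$. Left-invariant tensor fields on $G$ are identified with bilinear forms on $\mathfrak g$; $Q|_{\mathfrak u}$ denotes $Q$ restricted to $\mathfrak u$ and extended by zero on its $Q$-orthogonal complement. $\mathcal M_K$ is the set of left-invariant metrics on $G$ naturally reductive with respect to $G\times K$ (acting by $(x,k)y=xyk^{-1}$), which by a theorem of Gordon are exactly the metrics $\beta Q|_{\mathfrak p}+\alpha_1Q|_{\mathfrak k_1}$ with $\beta,\alpha_1>0$. *)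

theory Defs
  imports "HOL-Analysis.Analysis"
begin

text \<open>The Lie algebra of G is modelled as a finite-dimensional real vector space
  (a euclidean_space type; its inner product is used only to compute traces, which are
  basis independent) with a bracket br.\<close>

definition lie_algebra :: "('g::euclidean_space \<Rightarrow> 'g \<Rightarrow> 'g) \<Rightarrow> bool" where
  "lie_algebra br \<longleftrightarrow>
     (\<forall>x. linear (br x)) \<and> (\<forall>y. linear (\<lambda>x. br x y)) \<and>
     (\<forall>x y. br x y = - br y x) \<and>
     (\<forall>x y z. br x (br y z) + br y (br z x) + br z (br x y) = 0)"

definition tr :: "('g::euclidean_space \<Rightarrow> 'g) \<Rightarrow> real" where
  "tr f = (\<Sum>b\<in>Basis. f b \<bullet> b)"

definition killing :: "('g::euclidean_space \<Rightarrow> 'g \<Rightarrow> 'g) \<Rightarrow> 'g \<Rightarrow> 'g \<Rightarrow> real" where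
  "killing br x y = tr (\<lambda>z. br x (br y z))"

definition lie_ideal_in :: "('g::euclidean_space \<Rightarrow> 'g \<Rightarrow> 'g) \<Rightarrow> 'g set \<Rightarrow> 'g set \<Rightarrow> bool" where
  "lie_ideal_in br V I \<longleftrightarrow> subspace I \<and> I \<subseteq> V \<and> (\<forall>x\<in>V. \<forall>y\<in>I. br x y \<in> I)"

definition simple_on :: "('g::euclidean_space \<Rightarrow> 'g \<Rightarrow> 'g) \<Rightarrow> 'g set \<Rightarrow> bool" where
  "simple_on br V \<longleftrightarrow> subspace V \<and> (\<forall>x\<in>V. \<forall>y\<in>V. br x y \<in> V) \<and>
     (\<exists>x\<in>V. \<exists>y\<in>V. br x y \<noteq> 0) \<and>
     (\<forall>I. lie_ideal_in br V I \<longrightarrow> I = {0} \<or> I = V)"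

text \<open>Cartan decomposition g = k + p with p the B-orthogonal complement of k
  (Lie-algebra data of a maximal compact subgroup K of the non-compact simple group G).\<close>
definition pcomp :: "('g::euclidean_space \<Rightarrow> 'g \<Rightarrow> 'g) \<Rightarrow> 'g set \<Rightarrow> 'g set" where
  "pcomp br k = {X. \<forall>Y\<in>k. killing br X Y = 0}"

definition cartan_decomp :: "('g::euclidean_space \<Rightarrow> 'g \<Rightarrow> 'g) \<Rightarrow> 'g set \<Rightarrow> bool" where
  "cartan_decomp br k \<longleftrightarrow> subspace k \<and>
     (\<forall>x\<in>k. \<forall>y\<in>k. br x y \<in> k) \<and>
     (\<forall>X\<in>k. X \<noteq> 0 \<longrightarrow> killing br X X < 0) \<and>
     (\<forall>X\<in>pcomp br k. X \<noteq> 0 \<longrightarrow> killing br X X > 0) \<and>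
     (\<forall>x\<in>k. \<forall>y\<in>pcomp br k. br x y \<in> pcomp br k) \<and>
     (\<forall>x\<in>pcomp br k. \<forall>y\<in>pcomp br k. br x y \<in> k)"

definition projk :: "('g::euclidean_space \<Rightarrow> 'g \<Rightarrow> 'g) \<Rightarrow> 'g set \<Rightarrow> 'g \<Rightarrow> 'g" where
  "projk br k X = (THE a. a \<in> k \<and> X - a \<in> pcomp br k)"

definition projp :: "('g::euclidean_space \<Rightarrow> 'g \<Rightarrow> 'g) \<Rightarrow> 'g set \<Rightarrow> 'g \<Rightarrow> 'g" where
  "projp br k X = X - projk br k X"

text \<open>Killing form of the Lie algebra k: trace of ad_k x ad_k y on k, computed as the trace
  of (ad x ad y) composed with the projection onto k (equal to the trace on k).\<close>
definition killing_k :: "('g::euclidean_space \<Rightarrow> 'g \<Rightarrow> 'g) \<Rightarrow> 'g set \<Rightarrow> 'g \<Rightarrow> 'g \<Rightarrow> real" where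
  "killing_k br k x y = tr (\<lambda>z. br x (br y (projk br k z)))"

text \<open>Q = B|p - B|k; Q|_p and Q|_k extended by zero on the Q-orthogonal complement.\<close>
definition Qp :: "('g::euclidean_space \<Rightarrow> 'g \<Rightarrow> 'g) \<Rightarrow> 'g set \<Rightarrow> 'g \<Rightarrow> 'g \<Rightarrow> real" where
  "Qp br k X Y = killing br (projp br k X) (projp br k Y)"

definition Qk :: "('g::euclidean_space \<Rightarrow> 'g \<Rightarrow> 'g) \<Rightarrow> 'g set \<Rightarrow> 'g \<Rightarrow> 'g \<Rightarrow> real" where
  "Qk br k X Y = - killing br (projk br k X) (projk br k Y)"

text \<open>The set M_K of metrics beta Q|p + alpha_1 Q|k1 (Gordon's theorem).\<close>
definition MK :: "('g::euclidean_space \<Rightarrow> 'g \<Rightarrow> 'g) \<Rightarrow> 'g set \<Rightarrow> ('g \<Rightarrow> 'g \<Rightarrow> real) set" where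
  "MK br k = {g. \<exists>\<beta>>0. \<exists>\<alpha>>0. g = (\<lambda>X Y. \<beta> * Qp br k X Y + \<alpha> * Qk br k X Y)}"

text \<open>Levi-Civita connection, curvature and Ricci tensor of a left-invariant metric g,
  on left-invariant vector fields (Koszul formula).\<close>
definition lc :: "('g::euclidean_space \<Rightarrow> 'g \<Rightarrow> 'g) \<Rightarrow> ('g \<Rightarrow> 'g \<Rightarrow> real) \<Rightarrow> 'g \<Rightarrow> 'g \<Rightarrow> 'g" where
  "lc br g X Y = (THE U. \<forall>Z. 2 * g U Z = g (br X Y) Z - g (br Y Z) X + g (br Z X) Y)"

definition curv :: "('g::euclidean_space \<Rightarrow> 'g \<Rightarrow> 'g) \<Rightarrow> ('g \<Rightarrow> 'g \<Rightarrow> real) \<Rightarrow> 'g \<Rightarrow> 'g \<Rightarrow> 'g \<Rightarrow> 'g" where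
  "curv br g X Y Z = lc br g X (lc br g Y Z) - lc br g Y (lc br g X Z) - lc br g (br X Y) Z"

definition ric :: "('g::euclidean_space \<Rightarrow> 'g \<Rightarrow> 'g) \<Rightarrow> ('g \<Rightarrow> 'g \<Rightarrow> real) \<Rightarrow> 'g \<Rightarrow> 'g \<Rightarrow> real" where
  "ric br g Y Z = tr (\<lambda>X. curv br g X Y Z)"

definition sols :: "('g::euclidean_space \<Rightarrow> 'g \<Rightarrow> 'g) \<Rightarrow> 'g set \<Rightarrow> ('g \<Rightarrow> 'g \<Rightarrow> real)
     \<Rightarrow> (('g \<Rightarrow> 'g \<Rightarrow> real) \<times> real) set" where
  "sols br k T = {(g, c). g \<in> MK br k \<and> c > 0 \<and> ric br g = (\<lambda>X Y. c * T X Y)}"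

definition scal_rel :: "(('g \<Rightarrow> 'g \<Rightarrow> real) \<times> real) rel" where
  "scal_rel = {((g, c), (g', c')). \<exists>s>0. g' = (\<lambda>X Y. s * g X Y) \<and> c' = c}"

end

theory Submission
  imports Defs
begin


lemma tr_add: "tr (\<lambda>x. f x + g x) = tr f + tr g"
  by (simp add: tr_def inner_add_left sum.distrib)
lemma tr_diff: "tr (\<lambda>x. f x - g x) = tr f - tr g"
  by (simp add: tr_def inner_diff_left sum_subtractf)
lemma tr_scale: "tr (\<lambda>x. c *\<^sub>R f x) = c * tr f"
  by (simp add: tr_def sum_distrib_left)
lemma tr_uminus: "tr (\<lambda>x. - f x) = - tr f"
  by (simp add: tr_def sum_negf)
lemma tr_zero: "tr (\<lambda>x. 0) = 0"
  by (simp add: tr_def)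

lemma lin_expand:
  fixes f :: "'a::euclidean_space \<Rightarrow> 'b::real_vector"
  assumes "linear f"
  shows "f y = (\<Sum>c\<in>Basis. (y \<bullet> c) *\<^sub>R f c)"
proof -
  have "f y = f (\<Sum>c\<in>Basis. (y \<bullet> c) *\<^sub>R c)" by (simp add: euclidean_representation)
  also have "\<dots> = (\<Sum>c\<in>Basis. (y \<bullet> c) *\<^sub>R f c)"
    using assms by (simp add: linear_sum linear_scale)
  finally show ?thesis .
qed

lemma tr_comm:
  fixes f g :: "'a::euclidean_space \<Rightarrow> 'a"
  assumes "linear f" "linear g"
  shows "tr (\<lambda>x. f (g x)) = tr (\<lambda>x. g (f x))"
proof -
  have "tr (\<lambda>x. f (g x)) = (\<Sum>b\<in>Basis. \<Sum>c\<in>Basis. (g b \<bullet> c) * (f c \<bullet> b))"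
    unfolding tr_def
    by (subst lin_expand[OF assms(1)]) (simp add: inner_sum_left)
  also have "\<dots> = (\<Sum>c\<in>Basis. \<Sum>b\<in>Basis. (f c \<bullet> b) * (g b \<bullet> c))"
    by (subst sum.swap) (simp add: mult.commute)
  also have "\<dots> = tr (\<lambda>x. g (f x))"
    unfolding tr_def
    by (subst lin_expand[OF assms(2)]) (simp add: inner_sum_left)
  finally show ?thesis .
qed

lemma tr_expand:
  fixes f :: "'a::euclidean_space \<Rightarrow> 'a" and e :: "'i \<Rightarrow> 'a"
  assumes fin: "finite I" and rep: "\<And>x. x = (\<Sum>i\<in>I. \<phi> i x *\<^sub>R e i)"
    and lphi: "\<And>i. linear (\<phi> i)" and lf: "linear f"
  shows "tr f = (\<Sum>i\<in>I. \<phi> i (f (e i)))"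
proof -
  have "tr f = (\<Sum>b\<in>Basis. f (\<Sum>i\<in>I. \<phi> i b *\<^sub>R e i) \<bullet> b)"
    unfolding tr_def using rep by (metis)
  also have "\<dots> = (\<Sum>b\<in>Basis. \<Sum>i\<in>I. \<phi> i b * (f (e i) \<bullet> b))"
    using lf by (simp add: linear_sum linear_scale inner_sum_left)
  also have "\<dots> = (\<Sum>i\<in>I. \<Sum>b\<in>Basis. \<phi> i b * (f (e i) \<bullet> b))"
    by (rule sum.swap)
  also have "\<dots> = (\<Sum>i\<in>I. \<phi> i (\<Sum>b\<in>Basis. (f (e i) \<bullet> b) *\<^sub>R b))"
    using lphi by (simp add: linear_sum linear_scale mult.commute)
  also have "\<dots> = (\<Sum>i\<in>I. \<phi> i (f (e i)))"
    by (simp add: euclidean_representation)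
  finally show ?thesis .
qed


lemma onb_expand:
  fixes U :: "'a::euclidean_space set"
  assumes fin: "finite U" and orth: "pairwise orthogonal U" and nrm: "\<And>u. u \<in> U \<Longrightarrow> norm u = 1"
    and x: "x \<in> span U"
  shows "x = (\<Sum>u\<in>U. (x \<bullet> u) *\<^sub>R u)"
proof -
  define y where "y = x - (\<Sum>u\<in>U. (x \<bullet> u) *\<^sub>R u)"
  have yv: "y \<bullet> v = 0" if v: "v \<in> U" for v
  proof -
    have "(\<Sum>u\<in>U. (x \<bullet> u) * (u \<bullet> v)) = (\<Sum>u\<in>U. if u = v then x \<bullet> v else 0)"
    proof (rule sum.cong[OF refl])
      fix u assume u: "u \<in> U"
      show "(x \<bullet> u) * (u \<bullet> v) = (if u = v then x \<bullet> v else 0)"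
      proof (cases "u = v")
        case True
        then show ?thesis using nrm[OF v] by (simp add: norm_eq_1)
      next
        case False
        then show ?thesis using orth u v by (simp add: pairwise_def orthogonal_def)
      qed
    qed
    also have "\<dots> = x \<bullet> v" using fin v by simp
    finally show ?thesis unfolding y_def by (simp add: inner_diff_left inner_sum_left)
  qed
  have ys: "y \<in> span U" unfolding y_def
    by (intro span_diff x span_sum span_scale span_base) auto
  have "orthogonal y y"
    by (rule orthogonal_to_span[OF ys]) (simp add: orthogonal_def yv)
  then have "y = 0" by (simp add: orthogonal_def)
  then show ?thesis unfolding y_def by simp
qed



locale cdec =
  fixes br :: "'g::euclidean_space \<Rightarrow> 'g \<Rightarrow> 'g" and k :: "'g set"
  assumes lie: "lie_algebra br" and cartan: "cartan_decomp br k" and ksimp: "simple_on br k"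
begin

abbreviation "p \<equiv> pcomp br k"
abbreviation "B \<equiv> killing br"

lemma lin_r: "linear (br x)" using lie unfolding lie_algebra_def by blast
lemma lin_l: "linear (\<lambda>x. br x y)" using lie unfolding lie_algebra_def by blast
lemma skew: "br x y = - br y x" using lie unfolding lie_algebra_def by blast
lemma jac: "br x (br y z) + br y (br z x) + br z (br x y) = 0" using lie unfolding lie_algebra_def by blast

lemma br_add_l[simp]: "br (a + b) c = br a c + br b c" using linear_add[OF lin_l] .
lemma br_add_r[simp]: "br c (a + b) = br c a + br c b" using linear_add[OF lin_r] .
lemma br_scale_l[simp]: "br (r *\<^sub>R a) c = r *\<^sub>R br a c" using linear_scale[OF lin_l] .
lemma br_scale_r[simp]: "br c (r *\<^sub>R a) = r *\<^sub>R br c a" using linear_scale[OF lin_r] .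
lemma br_0_l[simp]: "br 0 c = 0" using linear_0[OF lin_l] .
lemma br_0_r[simp]: "br c 0 = 0" using linear_0[OF lin_r] .
lemma br_neg_l[simp]: "br (- a) c = - br a c" using linear_neg[OF lin_l] .
lemma br_neg_r[simp]: "br c (- a) = - br c a" using linear_neg[OF lin_r] .
lemma br_diff_l[simp]: "br (a - b) c = br a c - br b c" using linear_diff[OF lin_l] .
lemma br_diff_r[simp]: "br c (a - b) = br c a - br c b" using linear_diff[OF lin_r] .

lemma br_br: "br (br x y) z = br x (br y z) - br y (br x z)"
proof -
  have j: "br x (br y z) + br y (br z x) + br z (br x y) = 0" by (rule jac)
  have c: "br z (br x y) = - (br x (br y z) + br y (br z x))"
    using j by (metis add.commute add_eq_0_iff2 minus_unique)
  have "br (br x y) z = - br z (br x y)" by (rule skew)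
  also have "\<dots> = br x (br y z) + br y (br z x)" using c by simp
  also have "br y (br z x) = - br y (br x z)" using skew[of z x] by simp
  finally show ?thesis by simp
qed

lemma B_def': "B x y = tr (\<lambda>z. br x (br y z))" by (simp add: killing_def)

lemma B_add_l[simp]: "B (a + b) c = B a c + B b c" by (simp add: B_def' tr_add)
lemma B_add_r[simp]: "B c (a + b) = B c a + B c b" by (simp add: B_def' tr_add)
lemma B_scale_l[simp]: "B (r *\<^sub>R a) c = r * B a c" by (simp add: B_def' tr_scale)
lemma B_scale_r[simp]: "B c (r *\<^sub>R a) = r * B c a" by (simp add: B_def' tr_scale)
lemma B_0_l[simp]: "B 0 c = 0" by (simp add: B_def' tr_zero)
lemma B_0_r[simp]: "B c 0 = 0" by (simp add: B_def' tr_zero)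
lemma B_neg_l[simp]: "B (- a) c = - B a c" by (simp add: B_def' tr_uminus)
lemma B_neg_r[simp]: "B c (- a) = - B c a" by (simp add: B_def' tr_uminus)
lemma B_diff_l[simp]: "B (a - b) c = B a c - B b c" by (simp add: B_def' tr_diff)
lemma B_diff_r[simp]: "B c (a - b) = B c a - B c b" by (simp add: B_def' tr_diff)
lemma B_sum_l: "finite I \<Longrightarrow> B (\<Sum>i\<in>I. f i) c = (\<Sum>i\<in>I. B (f i) c)"
  by (induct I rule: finite_induct) auto
lemma B_sum_r: "finite I \<Longrightarrow> B c (\<Sum>i\<in>I. f i) = (\<Sum>i\<in>I. B c (f i))"
  by (induct I rule: finite_induct) auto

lemma linB_l: "linear (\<lambda>x. B x y)" by (rule linearI) auto
lemma linB_r: "linear (\<lambda>y. B x y)" by (rule linearI) auto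

lemma B_sym: "B x y = B y x"
  unfolding B_def' by (rule tr_comm[OF lin_r lin_r])

lemma B_inv: "B (br x y) z = B x (br y z)"
proof -
  have "B (br x y) z = tr (\<lambda>w. br x (br y (br z w))) - tr (\<lambda>w. br y (br x (br z w)))"
    unfolding B_def' by (simp add: br_br tr_diff)
  moreover have "B x (br y z) = tr (\<lambda>w. br x (br y (br z w))) - tr (\<lambda>w. br x (br z (br y w)))"
    unfolding B_def' by (simp add: br_br tr_diff)
  moreover have "tr (\<lambda>w. br y (br x (br z w))) = tr (\<lambda>w. br x (br z (br y w)))"
  proof -
    have l: "linear (\<lambda>w. br x (br z w))" by (rule linearI) auto
    show ?thesis using tr_comm[OF lin_r[of y] l] by simp
  qed
  ultimately show ?thesis by simp
qed

lemma B_cyc: "B (br x y) z = B (br y z) x"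
  by (metis B_inv B_sym)

lemma k_sub: "subspace k" using cartan by (simp add: cartan_decomp_def)
lemma kk: "x \<in> k \<Longrightarrow> y \<in> k \<Longrightarrow> br x y \<in> k" using cartan by (simp add: cartan_decomp_def)
lemma kneg: "x \<in> k \<Longrightarrow> x \<noteq> 0 \<Longrightarrow> B x x < 0" using cartan by (simp add: cartan_decomp_def)
lemma ppos: "x \<in> p \<Longrightarrow> x \<noteq> 0 \<Longrightarrow> B x x > 0" using cartan by (simp add: cartan_decomp_def)
lemma kp: "x \<in> k \<Longrightarrow> y \<in> p \<Longrightarrow> br x y \<in> p" using cartan by (simp add: cartan_decomp_def)
lemma pp: "x \<in> p \<Longrightarrow> y \<in> p \<Longrightarrow> br x y \<in> k" using cartan by (simp add: cartan_decomp_def)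
lemma p_iff: "x \<in> p \<longleftrightarrow> (\<forall>y\<in>k. B x y = 0)" by (simp add: pcomp_def)
lemma p_sub: "subspace p"
  unfolding subspace_def by (auto simp: p_iff)
lemma pk: "x \<in> p \<Longrightarrow> y \<in> k \<Longrightarrow> br x y \<in> p"
  using kp[of y x] skew[of x y] p_sub by (simp add: subspace_neg)
lemma Bpk: "x \<in> p \<Longrightarrow> y \<in> k \<Longrightarrow> B x y = 0" by (simp add: p_iff)
lemma Bkp: "x \<in> k \<Longrightarrow> y \<in> p \<Longrightarrow> B x y = 0" by (simp add: p_iff B_sym)
lemma kp_int: "x \<in> k \<Longrightarrow> x \<in> p \<Longrightarrow> x = 0"
  using kneg ppos by fastforce

end


lemma onb_coeff:
  fixes U :: "'a::euclidean_space set"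
  assumes fin: "finite U" and orth: "pairwise orthogonal U" and nrm: "\<And>u. u \<in> U \<Longrightarrow> norm u = 1"
    and v: "v \<in> U"
  shows "(\<Sum>u\<in>U. c u *\<^sub>R u) \<bullet> v = c v"
proof -
  have "(\<Sum>u\<in>U. c u *\<^sub>R u) \<bullet> v = (\<Sum>u\<in>U. c u * (u \<bullet> v))" by (simp add: inner_sum_left)
  also have "\<dots> = (\<Sum>u\<in>U. if u = v then c v else 0)"
  proof (rule sum.cong[OF refl])
    fix u assume u: "u \<in> U"
    show "c u * (u \<bullet> v) = (if u = v then c v else 0)"
      using orth u v nrm[OF v] by (auto simp: pairwise_def orthogonal_def norm_eq_1)
  qed
  also have "\<dots> = c v" using fin v by simp
  finally show ?thesis .
qed

context cdec begin

lemma nondeg: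
  assumes S: "subspace S" and nd: "\<And>x. x \<in> S \<Longrightarrow> x \<noteq> 0 \<Longrightarrow> B x x \<noteq> 0"
  obtains U d where "finite U" "U \<subseteq> S" "card U = dim S"
    "\<And>u. u \<in> U \<Longrightarrow> d u \<in> S"
    "\<And>u v. u \<in> U \<Longrightarrow> v \<in> U \<Longrightarrow> B (d u) v = (if u = v then 1 else 0)"
    "\<And>x. x \<in> S \<Longrightarrow> x = (\<Sum>u\<in>U. B x (d u) *\<^sub>R u)"
    "\<And>X. \<exists>a\<in>S. \<forall>w\<in>S. B (X - a) w = 0"
proof -
  obtain U where US: "U \<subseteq> S" and orth: "pairwise orthogonal U" and nrm: "\<And>x. x \<in> U \<Longrightarrow> norm x = 1"
    and ind: "independent U" and cU: "card U = dim S" and spU: "span U = S"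
    using orthonormal_basis_subspace[OF S] by blast
  have fin: "finite U" using ind by (rule finiteI_independent)
  define M where "M x = (\<Sum>u\<in>U. B x u *\<^sub>R u)" for x
  have linM: "linear M"
    by (rule linearI) (simp_all add: M_def scaleR_add_left sum.distrib scaleR_sum_right)
  have Mv: "M x \<bullet> v = B x v" if "v \<in> U" for x v
    unfolding M_def by (rule onb_coeff[OF fin orth nrm that])
  have MS: "M x \<in> S" for x
    unfolding M_def using US S by (intro subspace_sum[OF S] subspace_scale[OF S]) auto
  have kerM: "B z w = 0" if "M z = 0" "w \<in> S" for z w
  proof -
    have "\<And>v. v \<in> U \<Longrightarrow> B z v = 0" using Mv that(1) by (metis inner_zero_left)
    then show ?thesis using linear_eq_0_on_span[OF linB_r, of U z w] that(2) spU by auto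
  qed
  have injM: "inj_on M (span S)"
  proof (rule inj_onI)
    fix x y assume x: "x \<in> span S" and y: "y \<in> span S" and e: "M x = M y"
    have zS: "x - y \<in> S" using x y S by (simp add: subspace_diff span_eq_iff[THEN iffD2, OF S])
    have "M (x - y) = 0" using e linear_diff[OF linM] by simp
    then have "B (x - y) (x - y) = 0" using kerM zS by blast
    then show "x = y" using nd[OF zS] by auto
  qed
  have "dim (M ` S) = dim S" using dim_image_eq[OF linM injM] .
  then have MSS: "M ` S = S"
    by (intro subspace_dim_equal linear_subspace_image[OF linM S] S) (auto simp: MS)
  define d where "d u = (SOME a. a \<in> S \<and> M a = u)" for u
  have d: "d u \<in> S \<and> M (d u) = u" if "u \<in> U" for u
  proof -
    have "u \<in> M ` S" using that US MSS by auto
    then have "\<exists>a. a \<in> S \<and> M a = u" by auto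
    then show ?thesis unfolding d_def by (rule someI_ex)
  qed
  have dual: "B (d u) v = (if u = v then 1 else 0)" if "u \<in> U" "v \<in> U" for u v
  proof -
    have "B (d u) v = u \<bullet> v" using Mv[OF that(2), of "d u"] d[OF that(1)] by simp
    then show ?thesis using orth that nrm by (auto simp: pairwise_def orthogonal_def norm_eq_1)
  qed
  have expand: "x = (\<Sum>u\<in>U. B x (d u) *\<^sub>R u)" if x: "x \<in> S" for x
  proof -
    have xe: "x = (\<Sum>u\<in>U. (x \<bullet> u) *\<^sub>R u)" using onb_expand[OF fin orth nrm] x spU by auto
    have "B x (d u) = x \<bullet> u" if u: "u \<in> U" for u
    proof -
      have "B x (d u) = (\<Sum>v\<in>U. (x \<bullet> v) * B v (d u))"
        by (subst xe) (simp add: B_sum_l[OF fin])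
      also have "\<dots> = (\<Sum>v\<in>U. if v = u then x \<bullet> u else 0)"
        by (rule sum.cong[OF refl]) (auto simp: B_sym[of _ "d u"] dual u)
      also have "\<dots> = x \<bullet> u" using fin u by simp
      finally show ?thesis .
    qed
    then have "(\<Sum>u\<in>U. B x (d u) *\<^sub>R u) = (\<Sum>u\<in>U. (x \<bullet> u) *\<^sub>R u)" by simp
    then show ?thesis using xe by simp
  qed
  have comp: "\<exists>a\<in>S. \<forall>w\<in>S. B (X - a) w = 0" for X
  proof -
    obtain a where a: "a \<in> S" "M a = M X" using MS[of X] MSS by (metis imageE)
    have "M (X - a) = 0" using a linear_diff[OF linM] by simp
    then show ?thesis using a kerM by blast
  qed
  show thesis
    by (rule that[OF fin US cU _ dual expand comp]) (use d in auto)
qed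

lemma nondeg_ex:
  assumes S: "subspace S" and nd: "\<And>x. x \<in> S \<Longrightarrow> x \<noteq> 0 \<Longrightarrow> B x x \<noteq> 0"
  shows "\<exists>U d. finite U \<and> U \<subseteq> S \<and> card U = dim S \<and> (\<forall>u\<in>U. d u \<in> S)
    \<and> (\<forall>u\<in>U. \<forall>v\<in>U. B (d u) v = (if u = v then 1 else 0))
    \<and> (\<forall>x\<in>S. x = (\<Sum>u\<in>U. B x (d u) *\<^sub>R u))"
proof -
  obtain U where US: "U \<subseteq> S" and orth: "pairwise orthogonal U" and nrm: "\<And>x. x \<in> U \<Longrightarrow> norm x = 1"
    and ind: "independent U" and cU: "card U = dim S" and spU: "span U = S"
    using orthonormal_basis_subspace[OF S] by blast
  have fin: "finite U" using ind by (rule finiteI_independent)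
  define M where "M x = (\<Sum>u\<in>U. B x u *\<^sub>R u)" for x
  have linM: "linear M"
    by (rule linearI) (simp_all add: M_def scaleR_add_left sum.distrib scaleR_sum_right)
  have Mv: "M x \<bullet> v = B x v" if "v \<in> U" for x v
    unfolding M_def by (rule onb_coeff[OF fin orth nrm that])
  have MS: "M x \<in> S" for x
    unfolding M_def using US S by (intro subspace_sum[OF S] subspace_scale[OF S]) auto
  have kerM: "B z w = 0" if "M z = 0" "w \<in> S" for z w
  proof -
    have "\<And>v. v \<in> U \<Longrightarrow> B z v = 0" using Mv that(1) by (metis inner_zero_left)
    then show ?thesis using linear_eq_0_on_span[OF linB_r, of U z w] that(2) spU by auto
  qed
  have injM: "inj_on M (span S)"
  proof (rule inj_onI)
    fix x y assume x: "x \<in> span S" and y: "y \<in> span S" and e: "M x = M y"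
    have zS: "x - y \<in> S" using x y S by (simp add: subspace_diff span_eq_iff[THEN iffD2, OF S])
    have "M (x - y) = 0" using e linear_diff[OF linM] by simp
    then have "B (x - y) (x - y) = 0" using kerM zS by blast
    then show "x = y" using nd[OF zS] by auto
  qed
  have "dim (M ` S) = dim S" using dim_image_eq[OF linM injM] .
  then have MSS: "M ` S = S"
    by (intro subspace_dim_equal linear_subspace_image[OF linM S] S) (auto simp: MS)
  define d where "d u = (SOME a. a \<in> S \<and> M a = u)" for u
  have d: "d u \<in> S \<and> M (d u) = u" if "u \<in> U" for u
  proof -
    have "u \<in> M ` S" using that US MSS by auto
    then have "\<exists>a. a \<in> S \<and> M a = u" by auto
    then show ?thesis unfolding d_def by (rule someI_ex)
  qed
  have dual: "B (d u) v = (if u = v then 1 else 0)" if "u \<in> U" "v \<in> U" for u v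
  proof -
    have "B (d u) v = u \<bullet> v" using Mv[OF that(2), of "d u"] d[OF that(1)] by simp
    then show ?thesis using orth that nrm by (auto simp: pairwise_def orthogonal_def norm_eq_1)
  qed
  have expand: "x = (\<Sum>u\<in>U. B x (d u) *\<^sub>R u)" if x: "x \<in> S" for x
  proof -
    have xe: "x = (\<Sum>u\<in>U. (x \<bullet> u) *\<^sub>R u)" using onb_expand[OF fin orth nrm] x spU by auto
    have "B x (d u) = x \<bullet> u" if u: "u \<in> U" for u
    proof -
      have "B x (d u) = (\<Sum>v\<in>U. (x \<bullet> v) * B v (d u))"
        by (subst xe) (simp add: B_sum_l[OF fin])
      also have "\<dots> = (\<Sum>v\<in>U. if v = u then x \<bullet> u else 0)"
        by (rule sum.cong[OF refl]) (auto simp: B_sym[of _ "d u"] dual u)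
      also have "\<dots> = x \<bullet> u" using fin u by simp
      finally show ?thesis .
    qed
    then have "(\<Sum>u\<in>U. B x (d u) *\<^sub>R u) = (\<Sum>u\<in>U. (x \<bullet> u) *\<^sub>R u)" by simp
    then show ?thesis using xe by simp
  qed
  have comp: "\<exists>a\<in>S. \<forall>w\<in>S. B (X - a) w = 0" for X
  proof -
    obtain a where a: "a \<in> S" "M a = M X" using MS[of X] MSS by (metis imageE)
    have "M (X - a) = 0" using a linear_diff[OF linM] by simp
    then show ?thesis using a kerM by blast
  qed
  show ?thesis
    by (rule exI[of _ U], rule exI[of _ d]) (use fin US cU d dual expand in auto)
qed

end


context cdec begin

abbreviation "P \<equiv> projk br k"
abbreviation "PP \<equiv> projp br k"

lemma p_add: "x \<in> p \<Longrightarrow> y \<in> p \<Longrightarrow> x + y \<in> p" using p_sub by (simp add: subspace_add)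
lemma k_add: "x \<in> k \<Longrightarrow> y \<in> k \<Longrightarrow> x + y \<in> k" using k_sub by (simp add: subspace_add)
lemma p_diff: "x \<in> p \<Longrightarrow> y \<in> p \<Longrightarrow> x - y \<in> p" using p_sub by (simp add: subspace_diff)
lemma k_diff: "x \<in> k \<Longrightarrow> y \<in> k \<Longrightarrow> x - y \<in> k" using k_sub by (simp add: subspace_diff)
lemma p_scale: "x \<in> p \<Longrightarrow> c *\<^sub>R x \<in> p" using p_sub by (simp add: subspace_scale)
lemma k_scale: "x \<in> k \<Longrightarrow> c *\<^sub>R x \<in> k" using k_sub by (simp add: subspace_scale)
lemma p_neg: "x \<in> p \<Longrightarrow> - x \<in> p" using p_sub by (simp add: subspace_neg)
lemma k_neg: "x \<in> k \<Longrightarrow> - x \<in> k" using k_sub by (simp add: subspace_neg)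
lemma p_0: "0 \<in> p" using p_sub by (simp add: subspace_0)
lemma k_0: "0 \<in> k" using k_sub by (simp add: subspace_0)

lemma decomp: "\<exists>a\<in>k. X - a \<in> p"
proof -
  obtain U d where "\<And>X. \<exists>a\<in>k. \<forall>w\<in>k. B (X - a) w = 0"
    using nondeg[OF k_sub] kneg by (metis less_irrefl)
  then show ?thesis by (auto simp: p_iff)
qed

lemma P_char: assumes "a \<in> k" "X - a \<in> p" shows "P X = a"
  unfolding projk_def
proof (rule the_equality)
  show "a \<in> k \<and> X - a \<in> p" using assms by simp
  fix b assume b: "b \<in> k \<and> X - b \<in> p"
  have "b - a \<in> k" using b assms k_diff by simp
  moreover have "b - a \<in> p" using p_diff[of "X - a" "X - b"] b assms by simp
  ultimately show "b = a" using kp_int by fastforce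
qed

lemma P_mem[simp]: "P X \<in> k" and PX_p: "X - P X \<in> p"
proof -
  obtain a where "a \<in> k" "X - a \<in> p" using decomp by blast
  then have "P X = a" by (rule P_char)
  then show "P X \<in> k" "X - P X \<in> p" using \<open>a \<in> k\<close> \<open>X - a \<in> p\<close> by auto
qed

lemma PP_def': "PP X = X - P X" by (simp add: projp_def)
lemma PP_mem[simp]: "PP X \<in> p" using PX_p by (simp add: PP_def')
lemma P_Pi[simp]: "P X + PP X = X" by (simp add: PP_def')

lemma P_k[simp]: "x \<in> k \<Longrightarrow> P x = x" by (rule P_char) (auto simp: p_0)
lemma P_p[simp]: "x \<in> p \<Longrightarrow> P x = 0" by (rule P_char) (auto simp: k_0)
lemma PP_k[simp]: "x \<in> k \<Longrightarrow> PP x = 0" by (simp add: PP_def')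
lemma PP_p[simp]: "x \<in> p \<Longrightarrow> PP x = x" by (simp add: PP_def')

lemma P_add[simp]: "P (x + y) = P x + P y"
  by (rule P_char) (auto intro: k_add simp: P_mem, metis (no_types, lifting) PX_p add_diff_add p_add)
lemma P_scale[simp]: "P (c *\<^sub>R x) = c *\<^sub>R P x"
  by (rule P_char) (auto intro: k_scale, metis PX_p p_scale scaleR_right_diff_distrib)
lemma linP: "linear P" by (rule linearI) auto
lemma P_neg[simp]: "P (- x) = - P x" using linear_neg[OF linP] .
lemma P_diff[simp]: "P (x - y) = P x - P y" using linear_diff[OF linP] .
lemma P_0[simp]: "P 0 = 0" using linear_0[OF linP] .
lemma PP_add[simp]: "PP (x + y) = PP x + PP y" by (simp add: PP_def')
lemma PP_scale[simp]: "PP (c *\<^sub>R x) = c *\<^sub>R PP x" by (simp add: PP_def' scaleR_right_diff_distrib)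
lemma linPP: "linear PP" by (rule linearI) auto
lemma PP_neg[simp]: "PP (- x) = - PP x" using linear_neg[OF linPP] .
lemma PP_diff[simp]: "PP (x - y) = PP x - PP y" using linear_diff[OF linPP] .
lemma PP_0[simp]: "PP 0 = 0" using linear_0[OF linPP] .
lemma P_P[simp]: "P (P x) = P x" by simp
lemma PP_Pi[simp]: "PP (PP x) = PP x" by simp
lemma P_Pi'[simp]: "P (PP x) = 0" by simp
lemma PP_P'[simp]: "PP (P x) = 0" by simp

lemmas mem_simps[simp] = kk pp kp pk p_add k_add p_diff k_diff p_scale k_scale p_neg k_neg p_0 k_0

lemma tr_sw1:
  assumes lf: "linear f" and fp: "\<And>X. f X \<in> p" and fP: "\<And>X. f (P X) = f X"
  shows "tr f = 0"
proof -
  have lfP: "linear (\<lambda>X. f (P X))" using linear_compose[OF linP lf] by (simp add: o_def)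
  have "tr f = tr (\<lambda>X. PP (f (P X)))" using fp fP by simp
  also have "\<dots> = tr (\<lambda>X. f (P (PP X)))" by (rule tr_comm[OF linPP lfP])
  also have "\<dots> = 0" using linear_0[OF lf] by (simp add: tr_zero)
  finally show ?thesis .
qed

lemma tr_sw2:
  assumes lf: "linear f" and fk: "\<And>X. f X \<in> k" and fP: "\<And>X. f (PP X) = f X"
  shows "tr f = 0"
proof -
  have lfP: "linear (\<lambda>X. f (PP X))" using linear_compose[OF linPP lf] by (simp add: o_def)
  have "tr f = tr (\<lambda>X. P (f (PP X)))" using fk fP by simp
  also have "\<dots> = tr (\<lambda>X. f (PP (P X)))" by (rule tr_comm[OF linP lfP])
  also have "\<dots> = 0" using linear_0[OF lf] by (simp add: tr_zero)
  finally show ?thesis .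
qed

lemma k_span: "k = span {br a b | a b. a \<in> k \<and> b \<in> k}"
proof -
  let ?I = "span {br a b | a b. a \<in> k \<and> b \<in> k}"
  have sub: "?I \<subseteq> k" by (rule span_minimal) (auto simp: k_sub)
  have "lie_ideal_in br k ?I"
    unfolding lie_ideal_in_def
  proof (intro conjI ballI)
    show "subspace ?I" by (rule subspace_span)
    show "?I \<subseteq> k" by (rule sub)
    fix x y assume "x \<in> k" "y \<in> ?I"
    then have "br x y \<in> {br a b | a b. a \<in> k \<and> b \<in> k}" using sub by blast
    then show "br x y \<in> ?I" by (rule span_base)
  qed
  moreover have "?I \<noteq> {0}"
  proof -
    obtain x y where "x \<in> k" "y \<in> k" "br x y \<noteq> 0" using ksimp unfolding simple_on_def by blast
    then have "br x y \<in> ?I" by (intro span_base) blast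
    then show ?thesis using \<open>br x y \<noteq> 0\<close> by blast
  qed
  ultimately show ?thesis using ksimp unfolding simple_on_def by blast
qed

lemma tr0_gen:
  assumes lQ: "linear Q" and cQ: "\<And>a X. a \<in> k \<Longrightarrow> Q (br a X) = br a (Q X)" and V: "V \<in> k"
  shows "tr (\<lambda>X. br V (Q X)) = 0"
proof -
  have lin: "linear (\<lambda>V. tr (\<lambda>X. br V (Q X)))"
    by (rule linearI) (simp_all add: tr_add tr_scale)
  have gen: "tr (\<lambda>X. br V (Q X)) = 0" if Vg: "V \<in> {br a b | a b. a \<in> k \<and> b \<in> k}" for V
  proof -
    obtain a b where ab: "V = br a b" "a \<in> k" "b \<in> k" using Vg by blast
    have l1: "linear (\<lambda>X. br b (Q X))" using linear_compose[OF lQ lin_r] by (simp add: o_def)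
    have "tr (\<lambda>X. br a (br b (Q X))) = tr (\<lambda>X. br b (Q (br a X)))"
      using tr_comm[OF lin_r l1] by simp
    also have "\<dots> = tr (\<lambda>X. br b (br a (Q X)))" using cQ[OF ab(2)] by simp
    finally have e: "tr (\<lambda>X. br a (br b (Q X))) = tr (\<lambda>X. br b (br a (Q X)))" .
    show ?thesis unfolding ab(1) br_br by (simp add: tr_diff e)
  qed
  have "V \<in> span {br a b | a b. a \<in> k \<and> b \<in> k}" using V k_span by simp
  then show ?thesis
    using linear_eq_0_on_span[where f="\<lambda>V. tr (\<lambda>X. br V (Q X))", OF lin gen] by blast
qed

lemma P_br_k: "a \<in> k \<Longrightarrow> P (br a X) = br a (P X)"
proof -
  assume a: "a \<in> k"
  have "br a X = br a (P X) + br a (PP X)" by (metis P_Pi br_add_r)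
  then show ?thesis using a by simp
qed
lemma PP_br_k: "a \<in> k \<Longrightarrow> PP (br a X) = br a (PP X)"
proof -
  assume a: "a \<in> k"
  have "br a X = br a (P X) + br a (PP X)" by (metis P_Pi br_add_r)
  then show ?thesis using a by simp
qed

lemma tr0P: "V \<in> k \<Longrightarrow> tr (\<lambda>X. br V (P X)) = 0" by (rule tr0_gen[OF linP P_br_k])
lemma tr0PP: "V \<in> k \<Longrightarrow> tr (\<lambda>X. br V (PP X)) = 0" by (rule tr0_gen[OF linPP PP_br_k])

end


context cdec begin

definition nab :: "real \<Rightarrow> 'g \<Rightarrow> 'g \<Rightarrow> 'g" where
  "nab t X Y = (1/2) *\<^sub>R br X Y + ((1+t)/2) *\<^sub>R (br (P X) (PP Y) - br (PP X) (P Y))"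

definition gm :: "real \<Rightarrow> real \<Rightarrow> 'g \<Rightarrow> 'g \<Rightarrow> real" where
  "gm \<beta> \<alpha> U V = \<beta> * B (PP U) (PP V) - \<alpha> * B (P U) (P V)"

lemma gm_eq: "(\<lambda>X Y. \<beta> * Qp br k X Y + \<alpha> * Qk br k X Y) = gm \<beta> \<alpha>"
  by (auto simp: gm_def Qp_def Qk_def fun_eq_iff)

lemma Bpk0[simp]: "x \<in> p \<Longrightarrow> y \<in> k \<Longrightarrow> B x y = 0" by (rule Bpk)
lemma Bkp0[simp]: "x \<in> k \<Longrightarrow> y \<in> p \<Longrightarrow> B x y = 0" by (rule Bkp)

lemma koszul_comp:
  assumes X1: "X1 \<in> k" and Y1: "Y1 \<in> k" and Z1: "Z1 \<in> k"
    and X2: "X2 \<in> p" and Y2: "Y2 \<in> p" and Z2: "Z2 \<in> p" and bpos: "\<beta> > 0"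
  shows "2 * gm \<beta> \<alpha> (nab (\<alpha>/\<beta>) (X1+X2) (Y1+Y2)) (Z1+Z2)
    = gm \<beta> \<alpha> (br (X1+X2) (Y1+Y2)) (Z1+Z2) - gm \<beta> \<alpha> (br (Y1+Y2) (Z1+Z2)) (X1+X2)
      + gm \<beta> \<alpha> (br (Z1+Z2) (X1+X2)) (Y1+Y2)"
proof -
  define a where "a = B (br X1 Y2) Z2"
  define b where "b = B (br X2 Y1) Z2"
  define c where "c = B (br X1 Y1) Z1"
  define d where "d = B (br X2 Y2) Z1"
  have e1: "B (br Y1 Z2) X2 = b" unfolding b_def by (metis B_cyc)
  have e2: "B (br Y2 Z1) X2 = d" unfolding d_def by (metis B_cyc)
  have e3: "B (br Y1 Z1) X1 = c" unfolding c_def by (metis B_cyc)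
  have e4: "B (br Y2 Z2) X1 = a" unfolding a_def by (metis B_cyc)
  have e5: "B (br Z1 X2) Y2 = d" unfolding d_def by (metis B_cyc)
  have e6: "B (br Z2 X1) Y2 = a" unfolding a_def by (metis B_cyc)
  have e7: "B (br Z1 X1) Y1 = c" unfolding c_def by (metis B_cyc)
  have e8: "B (br Z2 X2) Y1 = b" unfolding b_def by (metis B_cyc)
  note es = e1 e2 e3 e4 e5 e6 e7 e8 a_def[symmetric] b_def[symmetric] c_def[symmetric] d_def[symmetric]
  show ?thesis
    using X1 Y1 Z1 X2 Y2 Z2 bpos
    by (simp add: gm_def nab_def es algebra_simps) (simp add: field_simps)
qed

lemma koszul:
  assumes bpos: "\<beta> > 0"
  shows "2 * gm \<beta> \<alpha> (nab (\<alpha>/\<beta>) X Y) Z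
    = gm \<beta> \<alpha> (br X Y) Z - gm \<beta> \<alpha> (br Y Z) X + gm \<beta> \<alpha> (br Z X) Y"
  using koszul_comp[of "P X" "P Y" "P Z" "PP X" "PP Y" "PP Z" \<beta> \<alpha>] bpos by simp

lemma gm_add_l[simp]: "gm \<beta> \<alpha> (U + V) W = gm \<beta> \<alpha> U W + gm \<beta> \<alpha> V W"
  by (simp add: gm_def algebra_simps)
lemma gm_diff_l[simp]: "gm \<beta> \<alpha> (U - V) W = gm \<beta> \<alpha> U W - gm \<beta> \<alpha> V W"
  by (simp add: gm_def algebra_simps)

lemma gm_pos: assumes "\<beta> > 0" "\<alpha> > 0" "gm \<beta> \<alpha> W W = 0" shows "W = 0"
proof (rule ccontr)
  assume W: "W \<noteq> 0"
  have h1: "B (PP W) (PP W) \<ge> 0" using ppos[of "PP W"] by (cases "PP W = 0") auto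
  have h2: "B (P W) (P W) \<le> 0" using kneg[of "P W"] by (cases "P W = 0") auto
  have "PP W \<noteq> 0 \<or> P W \<noteq> 0" using W P_Pi[of W] by (metis add.left_neutral)
  then have "B (PP W) (PP W) > 0 \<or> B (P W) (P W) < 0" using ppos kneg by auto
  then have "gm \<beta> \<alpha> W W > 0"
  proof -
    have "\<alpha> * B (P W) (P W) \<le> 0" using h2 assms(2) by (simp add: mult_nonneg_nonpos)
    moreover have "\<beta> * B (PP W) (PP W) \<ge> 0" using h1 assms(1) by simp
    moreover have "\<alpha> * B (P W) (P W) < 0 \<or> \<beta> * B (PP W) (PP W) > 0"
      using \<open>B (PP W) (PP W) > 0 \<or> B (P W) (P W) < 0\<close> assms(1,2) by (auto simp: mult_pos_neg)
    ultimately show ?thesis unfolding gm_def by linarith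
  qed
  then show False using assms(3) by simp
qed

lemma lc_eq:
  assumes "\<beta> > 0" "\<alpha> > 0"
  shows "lc br (gm \<beta> \<alpha>) X Y = nab (\<alpha>/\<beta>) X Y"
  unfolding lc_def
proof (rule the_equality)
  show "\<forall>Z. 2 * gm \<beta> \<alpha> (nab (\<alpha>/\<beta>) X Y) Z
    = gm \<beta> \<alpha> (br X Y) Z - gm \<beta> \<alpha> (br Y Z) X + gm \<beta> \<alpha> (br Z X) Y"
    using koszul[OF assms(1)] by blast
  fix U assume U: "\<forall>Z. 2 * gm \<beta> \<alpha> U Z = gm \<beta> \<alpha> (br X Y) Z - gm \<beta> \<alpha> (br Y Z) X + gm \<beta> \<alpha> (br Z X) Y"
  have "gm \<beta> \<alpha> (U - nab (\<alpha>/\<beta>) X Y) Z = 0" for Z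
  proof -
    have "2 * gm \<beta> \<alpha> U Z = 2 * gm \<beta> \<alpha> (nab (\<alpha>/\<beta>) X Y) Z"
      using U koszul[OF assms(1)] by simp
    then show ?thesis by simp
  qed
  then have "U - nab (\<alpha>/\<beta>) X Y = 0" using gm_pos[OF assms] by blast
  then show "U = nab (\<alpha>/\<beta>) X Y" by simp
qed

end


context cdec begin

definition Bk :: "'g \<Rightarrow> 'g \<Rightarrow> real" where "Bk Y Z = tr (\<lambda>X. br Y (br Z (P X)))"
definition Bp :: "'g \<Rightarrow> 'g \<Rightarrow> real" where "Bp Y Z = tr (\<lambda>X. br Y (br Z (PP X)))"

lemma B_split: "B Y Z = Bk Y Z + Bp Y Z"
proof -
  have "B Y Z = tr (\<lambda>X. br Y (br Z (P X)) + br Y (br Z (PP X)))"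
    unfolding B_def' by (metis P_Pi br_add_r)
  then show ?thesis by (simp add: tr_add Bk_def Bp_def)
qed

lemma Bk_killing_k: "Bk Y Z = killing_k br k Y Z" by (simp add: Bk_def killing_k_def)

lemma linbr2: "linear (\<lambda>X. br Y (br Z (Q X)))" if "linear Q" for Q
  using linear_compose[OF linear_compose[OF that lin_r] lin_r] by (simp add: o_def)

lemma Bp_sym_p: assumes "Y \<in> p" "Z \<in> p" shows "Bp Y Z = Bp Z Y"
proof -
  have "Bp Y Z - Bp Z Y = tr (\<lambda>X. br (br Y Z) (PP X))"
    unfolding Bp_def by (simp add: br_br tr_diff)
  also have "\<dots> = 0" using assms by (intro tr0PP) simp
  finally show ?thesis by simp
qed

lemma Bk_Bp_p: assumes "Y \<in> p" "Z \<in> p" shows "Bk Y Z = Bp Z Y"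
proof -
  have l: "linear (\<lambda>X. br Z (P X))" using linear_compose[OF linP lin_r] by (simp add: o_def)
  have "Bk Y Z = tr (\<lambda>X. br Z (P (br Y X)))"
    unfolding Bk_def using tr_comm[OF lin_r l] by simp
  also have "\<dots> = tr (\<lambda>X. br Z (br Y (PP X)))"
  proof -
    have "P (br Y X) = br Y (PP X)" for X
    proof -
      have "br Y X = br Y (P X) + br Y (PP X)" by (metis P_Pi br_add_r)
      then show ?thesis using assms by simp
    qed
    then show ?thesis by simp
  qed
  finally show ?thesis by (simp add: Bp_def)
qed

lemma Bk_p: "Y \<in> p \<Longrightarrow> Z \<in> p \<Longrightarrow> Bk Y Z = B Y Z / 2"
  and Bp_p: "Y \<in> p \<Longrightarrow> Z \<in> p \<Longrightarrow> Bp Y Z = B Y Z / 2"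
  using B_split[of Y Z] Bk_Bp_p[of Y Z] Bp_sym_p[of Y Z] by auto

lemma trP0: assumes "linear f" "\<And>X. f (P X) \<in> p" shows "tr (\<lambda>X. f (P X)) = 0"
  by (rule tr_sw1) (use assms linear_compose[OF linP assms(1)] in \<open>auto simp: o_def\<close>)
lemma trPP0: assumes "linear f" "\<And>X. f (PP X) \<in> k" shows "tr (\<lambda>X. f (PP X)) = 0"
  by (rule tr_sw2) (use assms linear_compose[OF linPP assms(1)] in \<open>auto simp: o_def\<close>)

lemma nab_add_l[simp]: "nab t (a + b) c = nab t a c + nab t b c"
  by (simp add: nab_def algebra_simps)
lemma nab_add_r[simp]: "nab t c (a + b) = nab t c a + nab t c b"
  by (simp add: nab_def algebra_simps)

definition cv :: "real \<Rightarrow> 'g \<Rightarrow> 'g \<Rightarrow> 'g \<Rightarrow> 'g" where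
  "cv t X Y Z = nab t X (nab t Y Z) - nab t Y (nab t X Z) - nab t (br X Y) Z"
definition rc :: "real \<Rightarrow> 'g \<Rightarrow> 'g \<Rightarrow> real" where
  "rc t Y Z = tr (\<lambda>X. cv t X Y Z)"

lemma rc_add_l: "rc t (a + b) c = rc t a c + rc t b c"
  unfolding rc_def cv_def by (simp add: tr_add[symmetric] algebra_simps)
lemma rc_add_r: "rc t c (a + b) = rc t c a + rc t c b"
  unfolding rc_def cv_def by (simp add: tr_add[symmetric] algebra_simps)

lemma ric_rc: assumes "\<beta> > 0" "\<alpha> > 0" shows "ric br (gm \<beta> \<alpha>) Y Z = rc (\<alpha>/\<beta>) Y Z"
  unfolding ric_def curv_def rc_def cv_def lc_eq[OF assms] ..

lemma rc_split: "rc t Y Z = tr (\<lambda>X. nab t X (nab t Y Z)) - tr (\<lambda>X. nab t Y (nab t X Z)) - tr (\<lambda>X. nab t (br X Y) Z)"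
  unfolding rc_def cv_def by (simp add: tr_diff[symmetric])

lemma term1: "tr (\<lambda>X. nab t X W) = 0"
proof -
  define u where "u = (1+t)/2"
  have pwc: "nab t (X1 + X2) (W1 + W2) = (-1/2) *\<^sub>R br W1 X1 + (1/2 + u) *\<^sub>R br X1 W2
     + (u - 1/2) *\<^sub>R br W1 X2 + (1/2) *\<^sub>R br X2 W2"
    if "X1 \<in> k" "X2 \<in> p" "W1 \<in> k" "W2 \<in> p" for X1 X2 W1 W2
  proof -
    have s1: "br X1 W1 = - br W1 X1" by (rule skew)
    have s2: "br X2 W1 = - br W1 X2" by (rule skew)
    show ?thesis unfolding nab_def u_def using that
      by (simp add: s1 s2 algebra_simps)
  qed
  have pw: "nab t X W = (-1/2) *\<^sub>R br (P W) (P X) + (1/2 + u) *\<^sub>R br (P X) (PP W)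
     + (u - 1/2) *\<^sub>R br (P W) (PP X) + (1/2) *\<^sub>R br (PP X) (PP W)" for X
    using pwc[of "P X" "PP X" "P W" "PP W"] by simp
  have t1: "tr (\<lambda>X. br (P W) (P X)) = 0" by (rule tr0P) simp
  have t2: "tr (\<lambda>X. br (P X) (PP W)) = 0"
    by (rule trP0[of "\<lambda>V. br V (PP W)"]) (auto intro: linearI)
  have t3: "tr (\<lambda>X. br (P W) (PP X)) = 0" by (rule tr0PP) simp
  have t4: "tr (\<lambda>X. br (PP X) (PP W)) = 0"
    by (rule trPP0[of "\<lambda>V. br V (PP W)"]) (auto intro: linearI)
  show ?thesis unfolding pw by (simp only: tr_add tr_scale t1 t2 t3 t4)
qed

end


context cdec begin

lemma skew2: "br (br a b) c = br c (br b a)"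
  by (metis skew br_neg_r)

lemma tr_lin2: "tr (\<lambda>X. a *\<^sub>R f X + b *\<^sub>R g X) = a * tr f + b * tr g"
  by (simp only: tr_add tr_scale)

lemma rc_kk:
  assumes Y: "Y \<in> k" and Z: "Z \<in> k"
  shows "rc t Y Z = - ((-1/4) * Bk Y Z + (((1+t)/2)^2 - 1/4) * Bp Y Z)
                    - ((1/2) * Bk Z Y + (1/2 - (1+t)/2) * Bp Z Y)"
proof -
  define u where "u = (1+t)/2"
  have c2: "nab t Y (nab t (X1 + X2) Z) = (-1/4) *\<^sub>R br Y (br Z X1) + (u^2 - 1/4) *\<^sub>R br Y (br Z X2)"
    if "X1 \<in> k" "X2 \<in> p" for X1 X2
  proof -
    have s1: "br X1 Z = - br Z X1" by (rule skew)
    have s2: "br X2 Z = - br Z X2" by (rule skew)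
    show ?thesis unfolding nab_def u_def using that Y Z
      by (simp add: s1 s2 algebra_simps power2_eq_square)
  qed
  have c3: "nab t (br (X1 + X2) Y) Z = (1/2) *\<^sub>R br Z (br Y X1) + (1/2 - u) *\<^sub>R br Z (br Y X2)"
    if "X1 \<in> k" "X2 \<in> p" for X1 X2
  proof -
    have s1: "br (br X1 Y) Z = br Z (br Y X1)" by (rule skew2)
    have s2: "br (br X2 Y) Z = br Z (br Y X2)" by (rule skew2)
    show ?thesis unfolding nab_def u_def using that Y Z
      by (simp add: s1 s2 algebra_simps)
  qed
  have "tr (\<lambda>X. nab t Y (nab t X Z)) = tr (\<lambda>X. (-1/4) *\<^sub>R br Y (br Z (P X)) + (u^2 - 1/4) *\<^sub>R br Y (br Z (PP X)))"
    using c2[of "P X" "PP X" for X] by simp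
  also have "\<dots> = (-1/4) * Bk Y Z + (u^2 - 1/4) * Bp Y Z"
    unfolding tr_lin2 Bk_def Bp_def ..
  finally have T2: "tr (\<lambda>X. nab t Y (nab t X Z)) = (-1/4) * Bk Y Z + (u^2 - 1/4) * Bp Y Z" .
  have "tr (\<lambda>X. nab t (br X Y) Z) = tr (\<lambda>X. (1/2) *\<^sub>R br Z (br Y (P X)) + (1/2 - u) *\<^sub>R br Z (br Y (PP X)))"
    using c3[of "P X" "PP X" for X] by simp
  also have "\<dots> = (1/2) * Bk Z Y + (1/2 - u) * Bp Z Y"
    unfolding tr_lin2 Bk_def Bp_def ..
  finally have T3: "tr (\<lambda>X. nab t (br X Y) Z) = (1/2) * Bk Z Y + (1/2 - u) * Bp Z Y" .
  show ?thesis unfolding rc_split term1 T2 T3 u_def by simp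
qed

lemma rc_pp:
  assumes Y: "Y \<in> p" and Z: "Z \<in> p"
  shows "rc t Y Z = - ((-(1/4 + (1+t)/4)) * Bk Y Z + ((1+t)/4 - 1/4) * Bp Y Z)
                    - ((1/2) * Bk Z Y + (1/2 + (1+t)/2) * Bp Z Y)"
proof -
  define u where "u = (1+t)/2"
  have c2: "nab t Y (nab t (X1 + X2) Z) = (-(1/4 + u/2)) *\<^sub>R br Y (br Z X1) + (u/2 - 1/4) *\<^sub>R br Y (br Z X2)"
    if "X1 \<in> k" "X2 \<in> p" for X1 X2
  proof -
    have s1: "br X1 Z = - br Z X1" by (rule skew)
    have s2: "br X2 Z = - br Z X2" by (rule skew)
    show ?thesis unfolding nab_def u_def using that Y Z
      by (simp add: s1 s2 algebra_simps)
  qed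
  have c3: "nab t (br (X1 + X2) Y) Z = (1/2) *\<^sub>R br Z (br Y X1) + (1/2 + u) *\<^sub>R br Z (br Y X2)"
    if "X1 \<in> k" "X2 \<in> p" for X1 X2
  proof -
    have s1: "br (br X1 Y) Z = br Z (br Y X1)" by (rule skew2)
    have s2: "br (br X2 Y) Z = br Z (br Y X2)" by (rule skew2)
    show ?thesis unfolding nab_def u_def using that Y Z
      by (simp add: s1 s2 algebra_simps)
  qed
  have "tr (\<lambda>X. nab t Y (nab t X Z)) = tr (\<lambda>X. (-(1/4 + u/2)) *\<^sub>R br Y (br Z (P X)) + (u/2 - 1/4) *\<^sub>R br Y (br Z (PP X)))"
    using c2[of "P X" "PP X" for X] by simp
  also have "\<dots> = (-(1/4 + u/2)) * Bk Y Z + (u/2 - 1/4) * Bp Y Z"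
    unfolding tr_lin2 Bk_def Bp_def ..
  finally have T2: "tr (\<lambda>X. nab t Y (nab t X Z)) = (-(1/4 + u/2)) * Bk Y Z + (u/2 - 1/4) * Bp Y Z" .
  have "tr (\<lambda>X. nab t (br X Y) Z) = tr (\<lambda>X. (1/2) *\<^sub>R br Z (br Y (P X)) + (1/2 + u) *\<^sub>R br Z (br Y (PP X)))"
    using c3[of "P X" "PP X" for X] by simp
  also have "\<dots> = (1/2) * Bk Z Y + (1/2 + u) * Bp Z Y"
    unfolding tr_lin2 Bk_def Bp_def ..
  finally have T3: "tr (\<lambda>X. nab t (br X Y) Z) = (1/2) * Bk Z Y + (1/2 + u) * Bp Z Y" .
  show ?thesis unfolding rc_split term1 T2 T3 u_def by simp
qed

lemma rc_kp:
  assumes Y: "Y \<in> k" and Z: "Z \<in> p"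
  shows "rc t Y Z = 0"
proof -
  define u where "u = (1+t)/2"
  have c2: "nab t Y (nab t (X1 + X2) Z) = (1/4 + u + u^2) *\<^sub>R br Y (br X1 Z) + (1/4) *\<^sub>R br Y (br X2 Z)"
    if "X1 \<in> k" "X2 \<in> p" for X1 X2
    unfolding nab_def u_def using that Y Z
    by (simp add: algebra_simps power2_eq_square) (simp add: scaleR_left_distrib[symmetric])
  have c3: "nab t (br (X1 + X2) Y) Z = (1/2 + u) *\<^sub>R br (br X1 Y) Z + (1/2) *\<^sub>R br (br X2 Y) Z"
    if "X1 \<in> k" "X2 \<in> p" for X1 X2
    unfolding nab_def u_def using that Y Z by (simp add: algebra_simps)
  have a1: "tr (\<lambda>X. br Y (br (P X) Z)) = 0"
    by (rule trP0[of "\<lambda>V. br Y (br V Z)"]) (use Y Z in \<open>auto intro: linearI\<close>)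
  have a2: "tr (\<lambda>X. br Y (br (PP X) Z)) = 0"
    by (rule trPP0[of "\<lambda>V. br Y (br V Z)"]) (use Y Z in \<open>auto intro: linearI\<close>)
  have a3: "tr (\<lambda>X. br (br (P X) Y) Z) = 0"
    by (rule trP0[of "\<lambda>V. br (br V Y) Z"]) (use Y Z in \<open>auto intro: linearI\<close>)
  have a4: "tr (\<lambda>X. br (br (PP X) Y) Z) = 0"
    by (rule trPP0[of "\<lambda>V. br (br V Y) Z"]) (use Y Z in \<open>auto intro: linearI\<close>)
  have "tr (\<lambda>X. nab t Y (nab t X Z)) = tr (\<lambda>X. (1/4 + u + u^2) *\<^sub>R br Y (br (P X) Z) + (1/4) *\<^sub>R br Y (br (PP X) Z))"
    using c2[of "P X" "PP X" for X] by simp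
  also have "\<dots> = 0" unfolding tr_lin2 a1 a2 by simp
  finally have T2: "tr (\<lambda>X. nab t Y (nab t X Z)) = 0" .
  have "tr (\<lambda>X. nab t (br X Y) Z) = tr (\<lambda>X. (1/2 + u) *\<^sub>R br (br (P X) Y) Z + (1/2) *\<^sub>R br (br (PP X) Y) Z)"
    using c3[of "P X" "PP X" for X] by simp
  also have "\<dots> = 0" unfolding tr_lin2 a3 a4 by simp
  finally have T3: "tr (\<lambda>X. nab t (br X Y) Z) = 0" .
  show ?thesis unfolding rc_split term1 T2 T3 by simp
qed

lemma rc_pk:
  assumes Y: "Y \<in> p" and Z: "Z \<in> k"
  shows "rc t Y Z = 0"
proof -
  define u where "u = (1+t)/2"
  have c2: "nab t Y (nab t (X1 + X2) Z) = (1/4 - u/2) *\<^sub>R br Y (br X1 Z) + (1/4 - u/2) *\<^sub>R br Y (br X2 Z)"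
    if "X1 \<in> k" "X2 \<in> p" for X1 X2
    unfolding nab_def u_def using that Y Z by (simp add: algebra_simps)
  have c3: "nab t (br (X1 + X2) Y) Z = (1/2 - u) *\<^sub>R br (br X1 Y) Z + (1/2) *\<^sub>R br (br X2 Y) Z"
    if "X1 \<in> k" "X2 \<in> p" for X1 X2
    unfolding nab_def u_def using that Y Z by (simp add: algebra_simps)
  have a1: "tr (\<lambda>X. br Y (br (P X) Z)) = 0"
    by (rule trP0[of "\<lambda>V. br Y (br V Z)"]) (use Y Z in \<open>auto intro: linearI\<close>)
  have a2: "tr (\<lambda>X. br Y (br (PP X) Z)) = 0"
    by (rule trPP0[of "\<lambda>V. br Y (br V Z)"]) (use Y Z in \<open>auto intro: linearI\<close>)
  have a3: "tr (\<lambda>X. br (br (P X) Y) Z) = 0"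
    by (rule trP0[of "\<lambda>V. br (br V Y) Z"]) (use Y Z in \<open>auto intro: linearI\<close>)
  have a4: "tr (\<lambda>X. br (br (PP X) Y) Z) = 0"
    by (rule trPP0[of "\<lambda>V. br (br V Y) Z"]) (use Y Z in \<open>auto intro: linearI\<close>)
  have "tr (\<lambda>X. nab t Y (nab t X Z)) = tr (\<lambda>X. (1/4 - u/2) *\<^sub>R br Y (br (P X) Z) + (1/4 - u/2) *\<^sub>R br Y (br (PP X) Z))"
    using c2[of "P X" "PP X" for X] by simp
  also have "\<dots> = 0" unfolding tr_lin2 a1 a2 by simp
  finally have T2: "tr (\<lambda>X. nab t Y (nab t X Z)) = 0" .
  have "tr (\<lambda>X. nab t (br X Y) Z) = tr (\<lambda>X. (1/2 - u) *\<^sub>R br (br (P X) Y) Z + (1/2) *\<^sub>R br (br (PP X) Y) Z)"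
    using c3[of "P X" "PP X" for X] by simp
  also have "\<dots> = 0" unfolding tr_lin2 a3 a4 by simp
  finally have T3: "tr (\<lambda>X. nab t (br X Y) Z) = 0" .
  show ?thesis unfolding rc_split term1 T2 T3 by simp
qed

end


lemma tr_expand2:
  fixes f :: "'a::euclidean_space \<Rightarrow> 'a"
  assumes finI: "finite I" and finJ: "finite J"
    and rep: "\<And>x. x = (\<Sum>i\<in>I. \<phi> i x *\<^sub>R e i) + (\<Sum>j\<in>J. \<psi> j x *\<^sub>R c j)"
    and lphi: "\<And>i. linear (\<phi> i)" and lpsi: "\<And>j. linear (\<psi> j)" and lf: "linear f"
  shows "tr f = (\<Sum>i\<in>I. \<phi> i (f (e i))) + (\<Sum>j\<in>J. \<psi> j (f (c j)))"
proof -
  have "tr f = (\<Sum>b\<in>Basis. f ((\<Sum>i\<in>I. \<phi> i b *\<^sub>R e i) + (\<Sum>j\<in>J. \<psi> j b *\<^sub>R c j)) \<bullet> b)"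
    unfolding tr_def using rep by metis
  also have "\<dots> = (\<Sum>b\<in>Basis. (\<Sum>i\<in>I. \<phi> i b * (f (e i) \<bullet> b)) + (\<Sum>j\<in>J. \<psi> j b * (f (c j) \<bullet> b)))"
    using lf by (simp add: linear_sum linear_scale linear_add inner_sum_left inner_add_left)
  also have "\<dots> = (\<Sum>i\<in>I. \<Sum>b\<in>Basis. \<phi> i b * (f (e i) \<bullet> b)) + (\<Sum>j\<in>J. \<Sum>b\<in>Basis. \<psi> j b * (f (c j) \<bullet> b))"
    by (simp add: sum.distrib sum.swap[of _ Basis])
  also have "\<dots> = (\<Sum>i\<in>I. \<phi> i (\<Sum>b\<in>Basis. (f (e i) \<bullet> b) *\<^sub>R b)) + (\<Sum>j\<in>J. \<psi> j (\<Sum>b\<in>Basis. (f (c j) \<bullet> b) *\<^sub>R b))"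
    using lphi lpsi by (simp add: linear_sum linear_scale mult.commute)
  also have "\<dots> = (\<Sum>i\<in>I. \<phi> i (f (e i))) + (\<Sum>j\<in>J. \<psi> j (f (c j)))"
    by (simp add: euclidean_representation)
  finally show ?thesis .
qed

context cdec begin

lemma rc_formula:
  assumes kappa: "\<forall>X\<in>k. \<forall>Y\<in>k. killing_k br k X Y = \<kappa>1 * B X Y"
  shows "rc t Y Z = - ((2+t)/4) * B (PP Y) (PP Z) - ((\<kappa>1 + (1-\<kappa>1)*t^2)/4) * B (P Y) (P Z)"
proof -
  have kk: "Bk a b = \<kappa>1 * B a b" "Bp a b = (1 - \<kappa>1) * B a b" if "a \<in> k" "b \<in> k" for a b
    using kappa that B_split[of a b] by (auto simp: Bk_killing_k algebra_simps)
  have "rc t Y Z = rc t (P Y + PP Y) (P Z + PP Z)" by simp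
  also have "\<dots> = rc t (P Y) (P Z) + rc t (P Y) (PP Z) + rc t (PP Y) (P Z) + rc t (PP Y) (PP Z)"
    by (simp only: rc_add_l rc_add_r add.assoc)
  also have "\<dots> = rc t (P Y) (P Z) + rc t (PP Y) (PP Z)"
    by (simp add: rc_kp rc_pk)
  also have "rc t (P Y) (P Z) = - ((\<kappa>1 + (1-\<kappa>1)*t^2)/4) * B (P Y) (P Z)"
    unfolding rc_kk[OF P_mem P_mem] kk[OF P_mem P_mem] B_sym[of "P Z"]
    by (simp add: field_simps power2_eq_square)
  also have "rc t (PP Y) (PP Z) = - ((2+t)/4) * B (PP Y) (PP Z)"
    unfolding rc_pp[OF PP_mem PP_mem] Bk_p[OF PP_mem PP_mem] Bp_p[OF PP_mem PP_mem] B_sym[of "PP Z"]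
    by (simp add: field_simps)
  finally show ?thesis by simp
qed

lemma k_nd: "x \<in> k \<Longrightarrow> x \<noteq> 0 \<Longrightarrow> B x x \<noteq> 0" using kneg by fastforce
lemma p_nd: "x \<in> p \<Longrightarrow> x \<noteq> 0 \<Longrightarrow> B x x \<noteq> 0" using ppos by fastforce

lemma casimir:
  assumes kappa: "\<forall>X\<in>k. \<forall>Y\<in>k. killing_k br k X Y = \<kappa>1 * B X Y"
  shows "(1 - \<kappa>1) * real (dim k) = real (dim p) / 2"
proof -
  obtain U d where HU: "finite U \<and> U \<subseteq> k \<and> card U = dim k \<and> (\<forall>u\<in>U. d u \<in> k)
    \<and> (\<forall>u\<in>U. \<forall>v\<in>U. B (d u) v = (if u = v then 1 else 0))
    \<and> (\<forall>x\<in>k. x = (\<Sum>u\<in>U. B x (d u) *\<^sub>R u))"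
    using nondeg_ex[OF k_sub k_nd] by blast
  have finU: "finite U" and Uk: "U \<subseteq> k" and cU: "card U = dim k"
    and dk: "\<And>u. u \<in> U \<Longrightarrow> d u \<in> k"
    and dU: "\<And>u v. u \<in> U \<Longrightarrow> v \<in> U \<Longrightarrow> B (d u) v = (if u = v then 1 else 0)"
    and eU: "\<And>x. x \<in> k \<Longrightarrow> x = (\<Sum>u\<in>U. B x (d u) *\<^sub>R u)"
    using HU by auto
  obtain V e where HV: "finite V \<and> V \<subseteq> p \<and> card V = dim p \<and> (\<forall>u\<in>V. e u \<in> p)
    \<and> (\<forall>u\<in>V. \<forall>v\<in>V. B (e u) v = (if u = v then 1 else 0))
    \<and> (\<forall>x\<in>p. x = (\<Sum>u\<in>V. B x (e u) *\<^sub>R u))"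
    using nondeg_ex[OF p_sub p_nd] by blast
  have finV: "finite V" and Vp: "V \<subseteq> p" and cV: "card V = dim p"
    and ep: "\<And>u. u \<in> V \<Longrightarrow> e u \<in> p"
    and eV: "\<And>u v. u \<in> V \<Longrightarrow> v \<in> V \<Longrightarrow> B (e u) v = (if u = v then 1 else 0)"
    and exV: "\<And>x. x \<in> p \<Longrightarrow> x = (\<Sum>u\<in>V. B x (e u) *\<^sub>R u)"
    using HV by auto
  have texp: "tr f = (\<Sum>u\<in>U. B (P (f u)) (d u)) + (\<Sum>v\<in>V. B (PP (f v)) (e v))" if lf: "linear f" for f
  proof (rule tr_expand2[OF finU finV _ _ _ lf])
    fix x
    show "x = (\<Sum>u\<in>U. B (P x) (d u) *\<^sub>R u) + (\<Sum>v\<in>V. B (PP x) (e v) *\<^sub>R v)"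
      using eU[of "P x"] exV[of "PP x"] P_Pi[of x] by simp
  next
    fix u show "linear (\<lambda>x. B (P x) (d u))" by (rule linearI) auto
  next
    fix v show "linear (\<lambda>x. B (PP x) (e v))" by (rule linearI) auto
  qed
  have uU: "u \<in> k" if "u \<in> U" for u using Uk that by auto
  have vV: "v \<in> p" if "v \<in> V" for v using Vp that by auto
  have a: "Bp u (d u) = 1 - \<kappa>1" if u: "u \<in> U" for u
  proof -
    have "Bp u (d u) = B u (d u) - Bk u (d u)" using B_split[of u "d u"] by simp
    also have "\<dots> = (1 - \<kappa>1) * B (d u) u"
      using kappa uU[OF u] dk[OF u] by (simp add: Bk_killing_k B_sym[of u] algebra_simps)
    finally show ?thesis using dU[OF u u] by simp
  qed
  have b: "Bp u (d u) = (\<Sum>v\<in>V. B (br u (br (d u) v)) (e v))" if u: "u \<in> U" for u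
  proof -
    have "Bp u (d u) = (\<Sum>w\<in>U. B (P (br u (br (d u) (PP w)))) (d w)) + (\<Sum>v\<in>V. B (PP (br u (br (d u) (PP v)))) (e v))"
      unfolding Bp_def by (rule texp[OF linbr2[OF linPP]])
    also have "\<dots> = (\<Sum>v\<in>V. B (br u (br (d u) v)) (e v))"
      using uU[OF u] dk[OF u] by (simp add: uU vV)
    finally show ?thesis .
  qed
  have c: "(\<Sum>u\<in>U. B (br u (br (d u) v)) (e v)) = 1/2" if v: "v \<in> V" for v
  proof -
    have id: "B (br u (br (d u) v)) (e v) = - B (br v (br u (e v))) (d u)" for u
    proof -
      have "B (br u (br (d u) v)) (e v) = - B (br (br (d u) v) u) (e v)" by (subst skew) simp
      also have "\<dots> = - B (br (d u) v) (br u (e v))" by (simp add: B_inv)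
      also have "\<dots> = - B (d u) (br v (br u (e v)))" by (simp add: B_inv)
      finally show ?thesis by (simp add: B_sym[of "d u"])
    qed
    have lin: "linear (\<lambda>X. br v (br (P X) (e v)))" by (rule linearI) auto
    have "tr (\<lambda>X. br v (br (P X) (e v))) = (\<Sum>u\<in>U. B (P (br v (br (P u) (e v)))) (d u)) + (\<Sum>w\<in>V. B (PP (br v (br (P w) (e v)))) (e w))"
      by (rule texp[OF lin])
    also have "\<dots> = (\<Sum>u\<in>U. B (br v (br u (e v))) (d u))"
      using vV[OF v] ep[OF v] by (simp add: uU vV)
    finally have t1: "tr (\<lambda>X. br v (br (P X) (e v))) = (\<Sum>u\<in>U. B (br v (br u (e v))) (d u))" .
    have "tr (\<lambda>X. br v (br (P X) (e v))) = - Bk v (e v)"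
      unfolding Bk_def by (subst skew[of "P _"]) (simp add: tr_uminus)
    also have "\<dots> = - B v (e v) / 2" using vV[OF v] ep[OF v] by (simp add: Bk_p)
    also have "\<dots> = - 1/2" using eV[OF v v] by (simp add: B_sym[of v])
    finally have t2: "tr (\<lambda>X. br v (br (P X) (e v))) = - 1/2" .
    have "(\<Sum>u\<in>U. B (br u (br (d u) v)) (e v)) = - (\<Sum>u\<in>U. B (br v (br u (e v))) (d u))"
      by (simp add: id sum_negf)
    then show ?thesis using t1 t2 by simp
  qed
  have "(\<Sum>u\<in>U. Bp u (d u)) = (1 - \<kappa>1) * real (card U)" using a by simp
  moreover have "(\<Sum>u\<in>U. Bp u (d u)) = real (card V) / 2"
  proof -
    have "(\<Sum>u\<in>U. Bp u (d u)) = (\<Sum>u\<in>U. \<Sum>v\<in>V. B (br u (br (d u) v)) (e v))" using b by simp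
    also have "\<dots> = (\<Sum>v\<in>V. \<Sum>u\<in>U. B (br u (br (d u) v)) (e v))" by (rule sum.swap)
    also have "\<dots> = (\<Sum>v\<in>V. 1/2)" by (rule sum.cong[OF refl]) (rule c)
    finally show ?thesis by simp
  qed
  ultimately show ?thesis using cU cV by simp
qed


end


lemma quad_roots:
  fixes A T1 C t :: real
  assumes A: "A > 0" and D: "T1^2 - 4*A*C \<ge> 0"
  shows "A*t^2 - T1*t + C = 0 \<longleftrightarrow> t = (T1 + sqrt (T1^2 - 4*A*C))/(2*A) \<or> t = (T1 - sqrt (T1^2 - 4*A*C))/(2*A)"
proof -
  define s where "s = sqrt (T1^2 - 4*A*C)"
  have s2: "s^2 = T1^2 - 4*A*C" unfolding s_def using D by simp
  have "A * (t - (T1 + s)/(2*A)) * (t - (T1 - s)/(2*A)) = A*t^2 - T1*t + (T1^2 - s^2)/(4*A)"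
    using A by (simp add: field_simps power2_eq_square)
  also have "(T1^2 - s^2)/(4*A) = C" using A s2 by (simp add: field_simps)
  finally have "A*t^2 - T1*t + C = A * (t - (T1 + s)/(2*A)) * (t - (T1 - s)/(2*A))" by simp
  then show ?thesis using A unfolding s_def by auto
qed

lemma disc_nonneg:
  fixes A T1 C t :: real
  assumes "A*t^2 - T1*t + C = 0"
  shows "T1^2 - 4*A*C \<ge> 0"
proof -
  have "(2*A*t - T1)^2 = 4*A*(A*t^2 - T1*t) + T1^2" by (simp add: power2_eq_square algebra_simps)
  also have "A*t^2 - T1*t = - C" using assms by simp
  finally have "(2*A*t - T1)^2 = T1^2 - 4*A*C" by simp
  then show ?thesis by (metis zero_le_power2)
qed

lemma root_count1:
  fixes A T1 C :: real
  assumes A: "A > 0" and T1: "T1 > 0" and h: "T1^2 - 4*A*C = 0 \<or> C \<le> 0"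
  shows "card {t. t > 0 \<and> A*t^2 - T1*t + C = 0} = 1"
proof -
  define s where "s = sqrt (T1^2 - 4*A*C)"
  have D: "T1^2 - 4*A*C \<ge> 0"
  proof (cases "C \<le> 0")
    case True then have "4*A*C \<le> 0" using A by (simp add: mult_nonneg_nonpos)
    moreover have "T1^2 \<ge> 0" by simp
    ultimately show ?thesis by linarith
  next
    case False then have "T1^2 - 4*A*C = 0" using h by simp
    then show ?thesis by simp
  qed
  have s0: "s \<ge> 0" unfolding s_def using D by simp
  have r1: "(T1 + s)/(2*A) > 0" using A T1 s0 by simp
  have r2: "\<not> (T1 - s)/(2*A) > 0 \<or> (T1 - s)/(2*A) = (T1 + s)/(2*A)"
  proof (cases "T1^2 - 4*A*C = 0")
    case True then have "s = 0" unfolding s_def by simp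
    then show ?thesis by simp
  next
    case False
    then have C: "C \<le> 0" using h by simp
    have "T1^2 \<le> T1^2 - 4*A*C" using A C by (simp add: mult_nonneg_nonpos)
    then have "sqrt (T1^2) \<le> s" unfolding s_def by (rule real_sqrt_le_mono)
    then have "T1 \<le> s" using T1 by simp
    then have "(T1 - s)/(2*A) \<le> 0" using A by (simp add: divide_le_0_iff)
    then show ?thesis by simp
  qed
  have "{t. t > 0 \<and> A*t^2 - T1*t + C = 0} = {(T1 + s)/(2*A)}"
    using quad_roots[OF A D] r1 r2 unfolding s_def by auto
  then show ?thesis by simp
qed

lemma root_count2:
  fixes A T1 C :: real
  assumes A: "A > 0" and T1: "T1 > 0" and D: "T1^2 - 4*A*C > 0" and C: "C > 0"
  shows "card {t. t > 0 \<and> A*t^2 - T1*t + C = 0} = 2"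
proof -
  define s where "s = sqrt (T1^2 - 4*A*C)"
  have s0: "s > 0" unfolding s_def using D by simp
  have "T1^2 - 4*A*C < T1^2" using A C by simp
  then have "s < sqrt (T1^2)" unfolding s_def by (rule real_sqrt_less_mono)
  then have sT: "s < T1" using T1 by simp
  have r1: "(T1 + s)/(2*A) > 0" using A T1 s0 by simp
  have r2: "(T1 - s)/(2*A) > 0" using A sT by simp
  have ne: "(T1 + s)/(2*A) \<noteq> (T1 - s)/(2*A)" using A s0 by (simp add: divide_cancel_right)
  have "{t. t > 0 \<and> A*t^2 - T1*t + C = 0} = {(T1 + s)/(2*A), (T1 - s)/(2*A)}"
    using quad_roots[OF A less_imp_le[OF D]] r1 r2 unfolding s_def by auto
  then show ?thesis using ne by simp
qed



lemma scal_class: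
  assumes b: "(\<beta>::real) > 0"
  shows "scal_rel `` {((\<lambda>X Y. \<beta> * h X Y), c)} = scal_rel `` {(h, c)}"
proof (rule set_eqI)
  fix z :: "('a \<Rightarrow> 'a \<Rightarrow> real) \<times> real"
  obtain g' c' where z: "z = (g', c')" by (cases z)
  have "(\<exists>s>0. g' = (\<lambda>X Y. s * (\<beta> * h X Y))) \<longleftrightarrow> (\<exists>s>0. g' = (\<lambda>X Y. s * h X Y))"
  proof
    assume "\<exists>s>0. g' = (\<lambda>X Y. s * (\<beta> * h X Y))"
    then obtain s where "s > 0" "g' = (\<lambda>X Y. s * (\<beta> * h X Y))" by blast
    then show "\<exists>s>0. g' = (\<lambda>X Y. s * h X Y)" using b by (intro exI[of _ "s * \<beta>"]) (auto simp: mult.assoc)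
  next
    assume "\<exists>s>0. g' = (\<lambda>X Y. s * h X Y)"
    then obtain s where "s > 0" "g' = (\<lambda>X Y. s * h X Y)" by blast
    then show "\<exists>s>0. g' = (\<lambda>X Y. s * (\<beta> * h X Y))" using b by (intro exI[of _ "s / \<beta>"]) (auto simp: field_simps)
  qed
  then show "z \<in> scal_rel `` {((\<lambda>X Y. \<beta> * h X Y), c)} \<longleftrightarrow> z \<in> scal_rel `` {(h, c)}"
    unfolding z scal_rel_def by auto
qed

lemma scal_refl: "(h, c) \<in> scal_rel `` {(h, c)}"
  unfolding scal_rel_def by (auto intro: exI[of _ 1])

context cdec begin

lemma gm_scale: "\<beta> > 0 \<Longrightarrow> gm \<beta> \<alpha> = (\<lambda>X Y. \<beta> * gm 1 (\<alpha>/\<beta>) X Y)"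
  by (auto simp: gm_def fun_eq_iff field_simps)

lemma MK_eq: "MK br k = {gm \<beta> \<alpha> | \<beta> \<alpha>. \<beta> > 0 \<and> \<alpha> > 0}"
  unfolding MK_def gm_eq by blast

lemma ex_p: assumes "\<exists>X. X \<noteq> 0 \<and> \<not> B X X < 0" shows "\<exists>e\<in>p. e \<noteq> 0"
proof -
  obtain X where X: "X \<noteq> 0" "\<not> B X X < 0" using assms by blast
  show ?thesis
  proof (cases "PP X = 0")
    case True
    then have "X = P X" using P_Pi[of X] by simp
    then have "X \<in> k" by (metis P_mem)
    then show ?thesis using kneg X by blast
  next
    case False then show ?thesis using PP_mem by blast
  qed
qed

lemma ex_k: "\<exists>f\<in>k. f \<noteq> 0"
proof -
  obtain x y where "x \<in> k" "y \<in> k" "br x y \<noteq> 0" using ksimp unfolding simple_on_def by blast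
  then show ?thesis by (metis br_0_l)
qed

lemma ric_iff:
  assumes kappa: "\<forall>X\<in>k. \<forall>Y\<in>k. killing_k br k X Y = \<kappa>1 * B X Y"
    and e: "e \<in> p" "e \<noteq> 0" and f: "f \<in> k" "f \<noteq> 0" and b: "\<beta> > 0" and a: "\<alpha> > 0"
  shows "ric br (gm \<beta> \<alpha>) = (\<lambda>X Y. c * (- Tp * Qp br k X Y + T1 * Qk br k X Y))
     \<longleftrightarrow> (c * Tp = (2 + \<alpha>/\<beta>)/4 \<and> c * T1 = (\<kappa>1 + (1-\<kappa>1)*(\<alpha>/\<beta>)^2)/4)"
proof -
  define t where "t = \<alpha>/\<beta>"
  have R: "ric br (gm \<beta> \<alpha>) X Y = - ((2+t)/4) * B (PP X) (PP Y) - ((\<kappa>1 + (1-\<kappa>1)*t^2)/4) * B (P X) (P Y)" for X Y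
    unfolding ric_rc[OF b a] rc_formula[OF kappa] t_def ..
  have Q: "c * (- Tp * Qp br k X Y + T1 * Qk br k X Y) = - (c*Tp) * B (PP X) (PP Y) - (c*T1) * B (P X) (P Y)" for X Y
    by (simp add: Qp_def Qk_def algebra_simps)
  show ?thesis unfolding t_def[symmetric]
  proof
    assume H: "ric br (gm \<beta> \<alpha>) = (\<lambda>X Y. c * (- Tp * Qp br k X Y + T1 * Qk br k X Y))"
    have "ric br (gm \<beta> \<alpha>) e e = c * (- Tp * Qp br k e e + T1 * Qk br k e e)" using H by simp
    then have "- ((2+t)/4) * B e e = - (c*Tp) * B e e" unfolding R Q using e by simp
    moreover have "B e e \<noteq> 0" using ppos e by fastforce
    ultimately have 1: "c * Tp = (2+t)/4" by simp
    have "ric br (gm \<beta> \<alpha>) f f = c * (- Tp * Qp br k f f + T1 * Qk br k f f)" using H by simp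
    then have "- ((\<kappa>1 + (1-\<kappa>1)*t^2)/4) * B f f = - (c*T1) * B f f" unfolding R Q using f by simp
    moreover have "B f f \<noteq> 0" using kneg f by fastforce
    ultimately have 2: "c * T1 = (\<kappa>1 + (1-\<kappa>1)*t^2)/4" by simp
    show "c * Tp = (2+t)/4 \<and> c * T1 = (\<kappa>1 + (1-\<kappa>1)*t^2)/4" using 1 2 by simp
  next
    assume "c * Tp = (2+t)/4 \<and> c * T1 = (\<kappa>1 + (1-\<kappa>1)*t^2)/4"
    then have h1: "c * Tp = (2+t)/4" and h2: "c * T1 = (\<kappa>1 + (1-\<kappa>1)*t^2)/4" by auto
    show "ric br (gm \<beta> \<alpha>) = (\<lambda>X Y. c * (- Tp * Qp br k X Y + T1 * Qk br k X Y))"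
      unfolding fun_eq_iff R Q h1 h2 by simp
  qed
qed

end

theorem proposition6p1:
  fixes br :: "'g::euclidean_space \<Rightarrow> 'g \<Rightarrow> 'g"
    and k :: "'g set"
    and \<kappa>1 Tp T1 :: real
  assumes lie: "lie_algebra br"
    and simple: "simple_on br UNIV"
    and noncompact: "\<exists>X. X \<noteq> 0 \<and> \<not> killing br X X < 0"
    and cartan: "cartan_decomp br k"
    and k_simple: "simple_on br k"
    and kappa: "\<forall>X\<in>k. \<forall>Y\<in>k. killing_k br k X Y = \<kappa>1 * killing br X Y"
    and Tp_pos: "Tp > 0" and T1_pos: "T1 > 0"
  defines "n \<equiv> real (dim (pcomp br k))"
    and "d1 \<equiv> real (dim k)"
    and "T \<equiv> (\<lambda>X Y. - Tp * Qp br k X Y + T1 * Qk br k X Y)"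
  shows
    "(2 * n * Tp * (2 * T1 - \<kappa>1 * Tp) < - d1 * T1^2 \<longrightarrow>
        \<not> (\<exists>g\<in>MK br k. \<exists>c::real. ric br g = (\<lambda>X Y. c * T X Y)))
   \<and> ((2 * n * Tp * (2 * T1 - \<kappa>1 * Tp) = - d1 * T1^2 \<or> 2 * T1 - \<kappa>1 * Tp \<ge> 0) \<longrightarrow>
        card (sols br k T // scal_rel) = 1)
   \<and> ((- d1 * T1^2 < 2 * n * Tp * (2 * T1 - \<kappa>1 * Tp) \<and> 2 * n * Tp * (2 * T1 - \<kappa>1 * Tp) < 0) \<longrightarrow>
        card (sols br k T // scal_rel) = 2)"
proof -
  interpret cdec br k using lie cartan k_simple by unfold_locales
  obtain e where e: "e \<in> pcomp br k" "e \<noteq> 0" using ex_p[OF noncompact] by blast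
  obtain f where f: "f \<in> k" "f \<noteq> 0" using ex_k by blast
  have cas: "(1 - \<kappa>1) * d1 = n / 2" unfolding n_def d1_def by (rule casimir[OF kappa])
  have d1pos: "d1 > 0"
  proof -
    have "\<not> k \<subseteq> {0}" using f by blast
    then have "dim k \<noteq> 0" using dim_eq_0 by blast
    then show ?thesis unfolding d1_def by (simp del: dim_eq_0)
  qed
  have npos: "n > 0"
  proof -
    have "\<not> pcomp br k \<subseteq> {0}" using e by blast
    then have "dim (pcomp br k) \<noteq> 0" using dim_eq_0 by blast
    then show ?thesis unfolding n_def by (simp del: dim_eq_0)
  qed
  define A where "A = (1 - \<kappa>1) * Tp"
  define C where "C = \<kappa>1 * Tp - 2 * T1"
  have k1: "1 - \<kappa>1 > 0"
  proof -
    have "(1 - \<kappa>1) * d1 > 0" using cas npos by simp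
    then show ?thesis using d1pos by (simp add: zero_less_mult_iff)
  qed
  have Apos: "A > 0" unfolding A_def using k1 Tp_pos by simp
  have disc: "d1 * (T1^2 - 4*A*C) = d1 * T1^2 + 2 * n * Tp * (2 * T1 - \<kappa>1 * Tp)"
  proof -
    have "d1 * (4*A*C) = 4 * ((1 - \<kappa>1) * d1) * Tp * C" unfolding A_def by (simp add: algebra_simps)
    also have "\<dots> = 4 * (n / 2) * Tp * C" by (simp only: cas)
    also have "\<dots> = 2 * n * Tp * C" by simp
    finally show ?thesis unfolding C_def by (simp add: algebra_simps)
  qed
  have key: "ric br (gm \<beta> \<alpha>) = (\<lambda>X Y. c * T X Y) \<longleftrightarrow> c = (2 + \<alpha>/\<beta>)/(4*Tp) \<and> A*(\<alpha>/\<beta>)^2 - T1*(\<alpha>/\<beta>) + C = 0"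
    if "\<beta> > 0" "\<alpha> > 0" for \<beta> \<alpha> c
  proof -
    define t where "t = \<alpha>/\<beta>"
    define K where "K = \<kappa>1 + (1-\<kappa>1)*t^2"
    have e0: "A*t^2 - T1*t + C = Tp*K - (2+t)*T1" unfolding A_def C_def K_def by (simp add: algebra_simps)
    have e1: "c*Tp = (2+t)/4 \<longleftrightarrow> c = (2+t)/(4*Tp)" using Tp_pos by (auto simp: field_simps)
    have e2: "c*T1 = K/4 \<longleftrightarrow> Tp*K - (2+t)*T1 = 0" if "c = (2+t)/(4*Tp)"
      unfolding that using Tp_pos by (simp add: field_simps) (auto simp: algebra_simps)
    have "(c * Tp = (2 + t)/4 \<and> c * T1 = (\<kappa>1 + (1-\<kappa>1)*t^2)/4) \<longleftrightarrow> c = (2 + t)/(4*Tp) \<and> A*t^2 - T1*t + C = 0"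
      unfolding K_def[symmetric] e0 using e1 e2 by blast
    then show ?thesis unfolding T_def ric_iff[OF kappa e f that] t_def by simp
  qed
  define Rs where "Rs = {t. t > 0 \<and> A*t^2 - T1*t + C = 0}"
  define cls where "cls t = scal_rel `` {(gm 1 t, (2 + t)/(4*Tp))}" for t
  have quot: "sols br k T // scal_rel = cls ` Rs"
  proof (rule set_eqI)
    fix Z
    show "Z \<in> sols br k T // scal_rel \<longleftrightarrow> Z \<in> cls ` Rs"
    proof
      assume "Z \<in> sols br k T // scal_rel"
      then obtain x where x: "x \<in> sols br k T" and Zx: "Z = scal_rel `` {x}"
        unfolding quotient_def by blast
      obtain g c where xgc: "x = (g, c)" by (cases x)
      have gc: "(g, c) \<in> sols br k T" and Z: "Z = scal_rel `` {(g, c)}" using x Zx xgc by auto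
      from gc have "g \<in> MK br k" and ric: "ric br g = (\<lambda>X Y. c * T X Y)" unfolding sols_def by auto
      then obtain \<beta> \<alpha> where ba: "\<beta> > 0" "\<alpha> > 0" and g: "g = gm \<beta> \<alpha>" unfolding MK_eq by blast
      have c: "c = (2 + \<alpha>/\<beta>)/(4*Tp)" and q: "A*(\<alpha>/\<beta>)^2 - T1*(\<alpha>/\<beta>) + C = 0"
        using key[OF ba] ric g by auto
      have "Z = cls (\<alpha>/\<beta>)" unfolding Z g cls_def c gm_scale[OF ba(1)] scal_class[OF ba(1)] ..
      moreover have "\<alpha>/\<beta> \<in> Rs" unfolding Rs_def using q ba by simp
      ultimately show "Z \<in> cls ` Rs" by blast
    next
      assume "Z \<in> cls ` Rs"
      then obtain t where t: "t \<in> Rs" and Z: "Z = cls t" by blast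
      have tpos: "t > 0" and q: "A*t^2 - T1*t + C = 0" using t unfolding Rs_def by auto
      have "ric br (gm 1 t) = (\<lambda>X Y. ((2 + t)/(4*Tp)) * T X Y)" using key[of 1 t "(2 + t)/(4*Tp)"] tpos q by (simp del: times_divide_eq_left)
      moreover have "gm 1 t \<in> MK br k" unfolding MK_eq using tpos by (intro CollectI exI[of _ 1] exI[of _ t]) simp
      moreover have "(2 + t)/(4*Tp) > 0" using tpos Tp_pos by simp
      ultimately have "(gm 1 t, (2 + t)/(4*Tp)) \<in> sols br k T" unfolding sols_def by simp
      then show "Z \<in> sols br k T // scal_rel" unfolding Z cls_def quotient_def by blast
    qed
  qed
  have inj: "inj_on cls Rs"
  proof (rule inj_onI)
    fix t1 t2 assume "t1 \<in> Rs" "t2 \<in> Rs" "cls t1 = cls t2"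
    then have "(gm 1 t2, (2 + t2)/(4*Tp)) \<in> cls t1" unfolding cls_def using scal_refl by metis
    then have "(2 + t2)/(4*Tp) = (2 + t1)/(4*Tp)" unfolding cls_def scal_rel_def by auto
    then show "t1 = t2" using Tp_pos by (simp add: divide_cancel_right)
  qed
  have card: "card (sols br k T // scal_rel) = card Rs" unfolding quot using card_image[OF inj] .
  show ?thesis
  proof (intro conjI impI)
    assume H: "2 * n * Tp * (2 * T1 - \<kappa>1 * Tp) < - d1 * T1^2"
    show "\<not> (\<exists>g\<in>MK br k. \<exists>c::real. ric br g = (\<lambda>X Y. c * T X Y))"
    proof
      assume "\<exists>g\<in>MK br k. \<exists>c::real. ric br g = (\<lambda>X Y. c * T X Y)"
      then obtain \<beta> \<alpha> c where ba: "\<beta> > 0" "\<alpha> > 0" and ric: "ric br (gm \<beta> \<alpha>) = (\<lambda>X Y. c * T X Y)"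
        unfolding MK_eq by blast
      have "A*(\<alpha>/\<beta>)^2 - T1*(\<alpha>/\<beta>) + C = 0" using key[OF ba] ric by auto
      then have "T1^2 - 4*A*C \<ge> 0" by (rule disc_nonneg)
      then have "d1 * (T1^2 - 4*A*C) \<ge> 0" using d1pos by simp
      then show False using H disc by simp
    qed
  next
    assume H: "2 * n * Tp * (2 * T1 - \<kappa>1 * Tp) = - d1 * T1^2 \<or> 2 * T1 - \<kappa>1 * Tp \<ge> 0"
    have "T1^2 - 4*A*C = 0 \<or> C \<le> 0"
    proof (cases "2 * T1 - \<kappa>1 * Tp \<ge> 0")
      case True then show ?thesis unfolding C_def by simp
    next
      case False
      then have "d1 * (T1^2 - 4*A*C) = 0" using H disc by simp
      then show ?thesis using d1pos by simp
    qed
    then show "card (sols br k T // scal_rel) = 1"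
      unfolding card Rs_def by (rule root_count1[OF Apos T1_pos])
  next
    assume H: "- d1 * T1^2 < 2 * n * Tp * (2 * T1 - \<kappa>1 * Tp) \<and> 2 * n * Tp * (2 * T1 - \<kappa>1 * Tp) < 0"
    have "d1 * (T1^2 - 4*A*C) > 0" using H disc by simp
    then have D: "T1^2 - 4*A*C > 0" using d1pos by (simp add: zero_less_mult_iff)
    have "2 * T1 - \<kappa>1 * Tp < 0"
    proof (rule ccontr)
      assume "\<not> 2 * T1 - \<kappa>1 * Tp < 0"
      then have "2 * n * Tp * (2 * T1 - \<kappa>1 * Tp) \<ge> 0" using npos Tp_pos by simp
      then show False using H by simp
    qed
    then have Cp: "C > 0" unfolding C_def by simp
    show "card (sols br k T // scal_rel) = 2"
      unfolding card Rs_def by (rule root_count2[OF Apos T1_pos D Cp])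
  qed
qed


end
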